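(* In the D-RR setting under the strongly convex assumptions, suppose every $\alpha_t$ satisfies condition (SC). Then for every epoch $t$ and every $\ell\in\{0,\dots,m\}$, $$H_t^\ell\le\Big(1-\frac{\alpha_t\mu}{4}\Big)^\ell H_t^0+2\Big[\alpha_t\sigma^2_{\mathrm{shuffle}}\Big(1+\frac{240\alpha_t^2\rho_w^2L^3}{\mu(1-\rho_w^2)^2}\Big)+\frac{120\alpha_t^3\rho_w^2L^2}{\mu(1-\rho_w^2)^2}\sigma_*^2\Big]\sum_{k=0}^{\ell-1}\Big(1-\frac{\alpha_t\mu}{4}\Big)^k,$$ and, writing $\tilde H_{t+1}:=\mathbb{E}\|\bar x_{t+1}-x^*\|^2+\omega_t\,\mathbb{E}\|\mathbf{x}_{t+1}-\mathbf 1\bar x_{t+1}^\intercal\|^2$ (i.e. $\tilde H_{t+1}=H_t^m$, with weight $\omega_t$), $$\tilde H_{t+1}\le\Big(1-\frac{\alpha_t\mu}{4}\Big)^m H_t+2\Big[\alpha_t\sigma^2_{\mathrm{shuffle}}\Big(1+\frac{240\alpha_t^2\rho_w^2L^3}{\mu(1-\rho_w^2)^2}\Big)+\frac{120\alpha_t^3\rho_w^2L^2}{\mu(1-\rho_w^2)^2}\sigma_*^2\Big]\sum_{k=0}^{m-1}\Big(1-\frac{\alpha_t\mu}{4}\Big)^k .$$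
   Context: D-RR setting. Let $n,m,p\ge1$ be integers and $[k]=\{1,\dots,k\}$. For $i\in[n]$, $\ell\in[m]$ let $f_{i,\ell}:\mathbb{R}^p\to\mathbb{R}$ be differentiable; $f_i:=\frac1m\sum_{\ell=1}^m f_{i,\ell}$, $f:=\frac1n\sum_{i=1}^n f_i$. Let $W=(w_{ij})\in\mathbb{R}^{n\times n}$ be nonnegative, symmetric, with $W\mathbf 1=\mathbf 1$, compliant with an undirected connected graph on $[n]$ (for $i\ne j$, $w_{ij}>0$ iff $\{i,j\}$ is an edge); $\rho_w$ is the spectral norm of $W-\frac1n\mathbf 1\mathbf 1^\intercal$ (so $\rho_w<1$). The D-RR algorithm: given deterministic initial points $x_{i,0}\in\mathbb{R}^p$ and stepsizes $\alpha_t>0$, at each epoch $t=0,1,\dots$ each agent $i$ draws a permutation $(\pi^i_0,\dots,\pi^i_{m-1})$ of $[m]$ uniformly at random, independently across agents and epochs; sets $x^0_{i,t}=x_{i,t}$; for $\ell=0,\dots,m-1$ sets $x^{\ell+1}_{i,t}=\sum_{j=1}^n w_{ij}\big(x^\ell_{j,t}-\alpha_t\nabla f_{j,\pi^j_\ell}(x^\ell_{j,t})\big)$; sets $x_{i,t+1}=x^m_{i,t}$. Notation: $\mathbf{x}_t^\ell\in\mathbb{R}^{n\times p}$ has $i$-th row $(x^\ell_{i,t})^\intercal$, $\mathbf x_t:=\mathbf x_t^0$; $\bar x_t^\ell=\frac1n\sum_i x^\ell_{i,t}$, $\bar x_t:=\bar x_t^0$; $\mathbf 1(\bar x_t^\ell)^\intercal$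 is the $n\times p$ matrix all of whose rows equal $(\bar x_t^\ell)^\intercal$; $\|\cdot\|$ is Euclidean/Frobenius norm; $\mathbb{E}$ is expectation over all permutations. Strongly convex assumptions: each $f_{i,\ell}$ is $\mu$-strongly convex with $L$-Lipschitz gradient ($0<\mu\le L$); $x^*$ is the unique minimizer of $f$; $\sigma_*^2:=\frac{1}{mn}\sum_{i,\ell}\|\nabla f_{i,\ell}(x^* )\|^2$. For epoch $t$ define $\bar x_*^\ell:=x^*-\alpha_t\sum_{k=0}^{\ell-1}\frac1n\sum_{i=1}^n\nabla f_{i,\pi^i_k}(x^* )$ ($\ell=0,\dots,m$; so $\bar x_*^0=\bar x_*^m=x^*$), $\bar s_\ell:=\frac1n\sum_i f_{i,\pi^i_\ell}$, and $\sigma^2_{\mathrm{shuffle}}:=\max_{\ell=0,\dots,m-1}\mathbb{E}\big[\bar s_\ell(\bar x_*^\ell)-\bar s_\ell(x^* )-\langle\nabla\bar s_\ell(x^* ),\bar x_*^\ell-x^*\rangle\big]$ (it depends on $\alpha_t$). Condition (SC): $\alpha_t\le\min\Big\{\sqrt{\frac{2-\rho_w^2}{24\rho_w^2(5-\rho_w^2)}}\frac{1-\rho_w^2}{L},\ \frac{1-\rho_w^2}{2\mu},\ \frac{(1-\rho_w^2)\mu}{8\sqrt{30}L^2}\Big\}$ (first term $=+\infty$ if $\rho_w=0$). Lyapunov function: $\omega_t:=\frac{16\alpha_tL^2}{n\mu(1-\rho_w^2)}$, $H_t^\ell:=\mathbb{E}\|\bar x_t^\ell-\bar x_*^\ell\|^2+\omega_t\mathbb{E}\|\mathbf{x}_t^\ell-\mathbf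 1(\bar x_t^\ell)^\intercal\|^2$, and $H_t:=H_t^0=\mathbb{E}\|\bar x_t-x^*\|^2+\omega_t\mathbb{E}\|\mathbf x_t-\mathbf 1\bar x_t^\intercal\|^2$. *)

theory Defs
  imports "HOL-Analysis.Analysis" "HOL-Combinatorics.Permutations"
begin

text \<open>Agents are indexed by 0..n-1, local components by 0..m-1, epochs by t = 0,1,....
  A realisation of all random permutations is sigma :: nat => nat => nat => nat, where
  sigma t i is the permutation of agent i in epoch t (so pi^i_l = sigma t i l).\<close>

definition perm_set :: "nat \<Rightarrow> (nat \<Rightarrow> nat) set" where
  "perm_set m = {\<pi>. \<pi> permutes {..<m}}"

text \<open>All permutation choices of epochs 0..t (uniform, independent across agents and epochs).\<close>
definition perm_space :: "nat \<Rightarrow> nat \<Rightarrow> nat \<Rightarrow> (nat \<Rightarrow> nat \<Rightarrow> nat \<Rightarrow> nat) set" where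
  "perm_space n m t = PiE {..t} (\<lambda>_. PiE {..<n} (\<lambda>_. perm_set m))"

definition Exp :: "nat \<Rightarrow> nat \<Rightarrow> nat \<Rightarrow> ((nat \<Rightarrow> nat \<Rightarrow> nat \<Rightarrow> nat) \<Rightarrow> real) \<Rightarrow> real" where
  "Exp n m t X = (\<Sum>\<sigma>\<in>perm_space n m t. X \<sigma>) / real (card (perm_space n m t))"

definition drr_step :: "nat \<Rightarrow> (nat \<Rightarrow> nat \<Rightarrow> real) \<Rightarrow> (nat \<Rightarrow> nat \<Rightarrow> 'a::real_vector \<Rightarrow> 'a)
    \<Rightarrow> real \<Rightarrow> (nat \<Rightarrow> nat) \<Rightarrow> (nat \<Rightarrow> 'a) \<Rightarrow> (nat \<Rightarrow> 'a)" where
  "drr_step n W g a \<pi> x = (\<lambda>i. \<Sum>j<n. W i j *\<^sub>R (x j - a *\<^sub>R g j (\<pi> j) (x j)))"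

fun drr_inner :: "nat \<Rightarrow> (nat \<Rightarrow> nat \<Rightarrow> real) \<Rightarrow> (nat \<Rightarrow> nat \<Rightarrow> 'a::real_vector \<Rightarrow> 'a)
    \<Rightarrow> real \<Rightarrow> (nat \<Rightarrow> nat \<Rightarrow> nat) \<Rightarrow> nat \<Rightarrow> (nat \<Rightarrow> 'a) \<Rightarrow> (nat \<Rightarrow> 'a)" where
  "drr_inner n W g a \<sigma>t 0 x = x"
| "drr_inner n W g a \<sigma>t (Suc l) x = drr_step n W g a (\<lambda>j. \<sigma>t j l) (drr_inner n W g a \<sigma>t l x)"

fun drr_iter :: "nat \<Rightarrow> nat \<Rightarrow> (nat \<Rightarrow> nat \<Rightarrow> real) \<Rightarrow> (nat \<Rightarrow> nat \<Rightarrow> 'a::real_vector \<Rightarrow> 'a)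
    \<Rightarrow> (nat \<Rightarrow> real) \<Rightarrow> (nat \<Rightarrow> 'a) \<Rightarrow> (nat \<Rightarrow> nat \<Rightarrow> nat \<Rightarrow> nat) \<Rightarrow> nat \<Rightarrow> (nat \<Rightarrow> 'a)" where
  "drr_iter n m W g \<alpha> x0 \<sigma> 0 = x0"
| "drr_iter n m W g \<alpha> x0 \<sigma> (Suc t) = drr_inner n W g (\<alpha> t) (\<sigma> t) m (drr_iter n m W g \<alpha> x0 \<sigma> t)"

definition drr_x :: "nat \<Rightarrow> nat \<Rightarrow> (nat \<Rightarrow> nat \<Rightarrow> real) \<Rightarrow> (nat \<Rightarrow> nat \<Rightarrow> 'a::real_vector \<Rightarrow> 'a)
    \<Rightarrow> (nat \<Rightarrow> real) \<Rightarrow> (nat \<Rightarrow> 'a) \<Rightarrow> (nat \<Rightarrow> nat \<Rightarrow> nat \<Rightarrow> nat) \<Rightarrow> nat \<Rightarrow> nat \<Rightarrow> (nat \<Rightarrow> 'a)" where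
  "drr_x n m W g \<alpha> x0 \<sigma> t l = drr_inner n W g (\<alpha> t) (\<sigma> t) l (drr_iter n m W g \<alpha> x0 \<sigma> t)"

definition avg :: "nat \<Rightarrow> (nat \<Rightarrow> 'a::real_vector) \<Rightarrow> 'a" where
  "avg n x = (1 / real n) *\<^sub>R (\<Sum>i<n. x i)"

text \<open>Squared Frobenius norm of x - 1 xbar^T.\<close>
definition cons_err :: "nat \<Rightarrow> (nat \<Rightarrow> 'a::real_normed_vector) \<Rightarrow> real" where
  "cons_err n x = (\<Sum>i<n. (norm (x i - avg n x))\<^sup>2)"

definition xstar_bar :: "nat \<Rightarrow> (nat \<Rightarrow> nat \<Rightarrow> 'a::real_vector \<Rightarrow> 'a) \<Rightarrow> real
    \<Rightarrow> (nat \<Rightarrow> nat \<Rightarrow> nat) \<Rightarrow> 'a \<Rightarrow> nat \<Rightarrow> 'a" where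
  "xstar_bar n g a \<sigma>t xs l = xs - a *\<^sub>R (\<Sum>k<l. (1 / real n) *\<^sub>R (\<Sum>i<n. g i (\<sigma>t i k) xs))"

text \<open>rho_w: spectral (operator 2-) norm of W - (1/n) 1 1^T on R^n.\<close>
definition rho_w :: "nat \<Rightarrow> (nat \<Rightarrow> nat \<Rightarrow> real) \<Rightarrow> real" where
  "rho_w n W = Sup {sqrt (\<Sum>i<n. (\<Sum>j<n. (W i j - 1 / real n) * v j)\<^sup>2) | v. (\<Sum>j<n. (v j)\<^sup>2) \<le> 1}"

definition sigma_star_sq :: "nat \<Rightarrow> nat \<Rightarrow> (nat \<Rightarrow> nat \<Rightarrow> 'a::real_normed_vector \<Rightarrow> 'a) \<Rightarrow> 'a \<Rightarrow> real" where
  "sigma_star_sq n m g xs = (\<Sum>i<n. \<Sum>l<m. (norm (g i l xs))\<^sup>2) / (real m * real n)"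

definition sigma_shuffle_sq :: "nat \<Rightarrow> nat \<Rightarrow> (nat \<Rightarrow> nat \<Rightarrow> 'a::real_inner \<Rightarrow> real)
    \<Rightarrow> (nat \<Rightarrow> nat \<Rightarrow> 'a \<Rightarrow> 'a) \<Rightarrow> real \<Rightarrow> 'a \<Rightarrow> nat \<Rightarrow> real" where
  "sigma_shuffle_sq n m f g a xs t =
     Max ((\<lambda>l. Exp n m t (\<lambda>\<sigma>.
        let sbar = (\<lambda>y. (1 / real n) * (\<Sum>i<n. f i (\<sigma> t i l) y));
            gsbar = (1 / real n) *\<^sub>R (\<Sum>i<n. g i (\<sigma> t i l) xs);
            y = xstar_bar n g a (\<sigma> t) xs l
        in sbar y - sbar xs - inner gsbar (y - xs))) ` {..<m})"

definition omega :: "nat \<Rightarrow> real \<Rightarrow> real \<Rightarrow> real \<Rightarrow> real \<Rightarrow> real" where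
  "omega n L \<mu> \<rho> a = 16 * a * L\<^sup>2 / (real n * \<mu> * (1 - \<rho>\<^sup>2))"

definition drr_H :: "nat \<Rightarrow> nat \<Rightarrow> (nat \<Rightarrow> nat \<Rightarrow> real) \<Rightarrow> (nat \<Rightarrow> nat \<Rightarrow> 'a::real_normed_vector \<Rightarrow> 'a)
    \<Rightarrow> (nat \<Rightarrow> real) \<Rightarrow> (nat \<Rightarrow> 'a) \<Rightarrow> 'a \<Rightarrow> real \<Rightarrow> real \<Rightarrow> nat \<Rightarrow> nat \<Rightarrow> real" where
  "drr_H n m W g \<alpha> x0 xs L \<mu> t l =
     Exp n m t (\<lambda>\<sigma>. (norm (avg n (drr_x n m W g \<alpha> x0 \<sigma> t l) - xstar_bar n g (\<alpha> t) (\<sigma> t) xs l))\<^sup>2)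
     + omega n L \<mu> (rho_w n W) (\<alpha> t) * Exp n m t (\<lambda>\<sigma>. cons_err n (drr_x n m W g \<alpha> x0 \<sigma> t l))"

definition drr_Htilde :: "nat \<Rightarrow> nat \<Rightarrow> (nat \<Rightarrow> nat \<Rightarrow> real) \<Rightarrow> (nat \<Rightarrow> nat \<Rightarrow> 'a::real_normed_vector \<Rightarrow> 'a)
    \<Rightarrow> (nat \<Rightarrow> real) \<Rightarrow> (nat \<Rightarrow> 'a) \<Rightarrow> 'a \<Rightarrow> real \<Rightarrow> real \<Rightarrow> nat \<Rightarrow> real" where
  "drr_Htilde n m W g \<alpha> x0 xs L \<mu> t =
     Exp n m t (\<lambda>\<sigma>. (norm (avg n (drr_iter n m W g \<alpha> x0 \<sigma> (Suc t)) - xs))\<^sup>2)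
     + omega n L \<mu> (rho_w n W) (\<alpha> t) * Exp n m t (\<lambda>\<sigma>. cons_err n (drr_iter n m W g \<alpha> x0 \<sigma> (Suc t)))"

text \<open>Stepsize condition (SC); the first bound is vacuous when rho_w = 0.\<close>
definition cond_SC :: "real \<Rightarrow> real \<Rightarrow> real \<Rightarrow> real \<Rightarrow> bool" where
  "cond_SC \<rho> \<mu> L a \<longleftrightarrow>
     (\<rho> \<noteq> 0 \<longrightarrow> a \<le> sqrt ((2 - \<rho>\<^sup>2) / (24 * \<rho>\<^sup>2 * (5 - \<rho>\<^sup>2))) * (1 - \<rho>\<^sup>2) / L)
     \<and> a \<le> (1 - \<rho>\<^sup>2) / (2 * \<mu>)
     \<and> a \<le> (1 - \<rho>\<^sup>2) * \<mu> / (8 * sqrt 30 * L\<^sup>2)"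

end

theory Submission
  imports Defs
begin

lemma sum_dev_zero:
  fixes w :: "nat \<Rightarrow> 'a::real_vector"
  assumes "n \<ge> 1"
  shows "(\<Sum>j<n. w j - avg n w) = 0"
proof -
  have "(\<Sum>j<n. w j - avg n w) = (\<Sum>j<n. w j) - real n *\<^sub>R avg n w"
    by (simp add: sum_subtractf sum_constant_scaleR)
  also have "real n *\<^sub>R avg n w = (\<Sum>j<n. w j)"
    using assms by (simp add: avg_def)
  finally show ?thesis by simp
qed

lemma norm_plus_sq:
  fixes a b :: "'a::real_inner"
  shows "(norm (a + b))\<^sup>2 = (norm a)\<^sup>2 + 2 * inner a b + (norm b)\<^sup>2"
  by (simp add: power2_norm_eq_inner inner_add_left inner_add_right inner_commute)

lemma norm_minus_sq:
  fixes a b :: "'a::real_inner"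
  shows "(norm (a - b))\<^sup>2 = (norm a)\<^sup>2 - 2 * inner a b + (norm b)\<^sup>2"
  by (simp add: power2_norm_eq_inner inner_diff_left inner_diff_right inner_commute)

lemma sum_sq_decomp:
  fixes w :: "nat \<Rightarrow> 'a::real_inner"
  assumes "n \<ge> 1"
  shows "(\<Sum>j<n. (norm (w j - c))\<^sup>2) = cons_err n w + real n * (norm (avg n w - c))\<^sup>2"
proof -
  let ?m = "avg n w"
  have e: "(norm (w j - c))\<^sup>2 = (norm (w j - ?m))\<^sup>2 + 2 * inner (w j - ?m) (?m - c) + (norm (?m - c))\<^sup>2" for j
  proof -
    have "w j - c = (w j - ?m) + (?m - c)" by simp
    then show ?thesis using norm_plus_sq[of "w j - ?m" "?m - c"] by metis
  qed
  have z: "(\<Sum>j<n. inner (w j - ?m) (?m - c)) = 0"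
    using sum_dev_zero[OF assms, of w] by (simp add: inner_sum_left[symmetric])
  show ?thesis
    unfolding e sum.distrib cons_err_def
    by (simp add: sum_distrib_left[symmetric] z)
qed

lemma norm_avg_sq_le:
  fixes w :: "nat \<Rightarrow> 'a::real_inner"
  assumes "n \<ge> 1"
  shows "(norm (avg n w))\<^sup>2 \<le> (1 / real n) * (\<Sum>j<n. (norm (w j))\<^sup>2)"
proof -
  have "(\<Sum>j<n. (norm (w j - 0))\<^sup>2) = cons_err n w + real n * (norm (avg n w - 0))\<^sup>2"
    by (rule sum_sq_decomp[OF assms])
  moreover have "cons_err n w \<ge> 0" unfolding cons_err_def by (simp add: sum_nonneg)
  ultimately have "real n * (norm (avg n w))\<^sup>2 \<le> (\<Sum>j<n. (norm (w j))\<^sup>2)" by simp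
  with assms show ?thesis by (simp add: field_simps)
qed

lemma cons_le_sumsq:
  fixes w :: "nat \<Rightarrow> 'a::real_inner"
  assumes "n \<ge> 1"
  shows "cons_err n w \<le> (\<Sum>j<n. (norm (w j))\<^sup>2)"
  using sum_sq_decomp[OF assms, of w 0] by simp

lemma cocoerc:
  fixes F :: "'a::real_inner \<Rightarrow> real"
  assumes sc: "\<And>x y. F y \<ge> F x + inner (G x) (y - x)"
    and lip: "\<And>x y. norm (G x - G y) \<le> L * norm (x - y)"
    and L: "L > 0"
  shows "(norm (G y - G x))\<^sup>2 \<le> 4 * L * (F y - F x - inner (G x) (y - x))"
proof -
  define d where "d = G y - G x"
  define z where "z = y - (1 / (2 * L)) *\<^sub>R d"
  have 1: "F x + inner (G x) (z - x) \<le> F z" using sc by simp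
  have 2: "F z \<le> F y - inner (G z) (y - z)" using sc[of z y] by simp
  have 3: "inner (G z - G y) (z - y) \<le> L * (norm (z - y))\<^sup>2"
  proof -
    have "inner (G z - G y) (z - y) \<le> norm (G z - G y) * norm (z - y)" by (rule norm_cauchy_schwarz)
    also have "\<dots> \<le> L * norm (z - y) * norm (z - y)" using lip[of z y] by (simp add: mult_right_mono)
    finally show ?thesis by (simp add: power2_eq_square)
  qed
  have zy: "z - y = - ((1 / (2 * L)) *\<^sub>R d)" unfolding z_def by simp
  have "F x + inner (G x) (y - x) \<le> F y + inner (G y - G x) (z - y) + L * (norm (z - y))\<^sup>2"
  proof -
    have "inner (G x) (z - x) = inner (G x) (y - x) + inner (G x) (z - y)"
      by (simp add: inner_diff_right)
    moreover have "- inner (G z) (y - z) = inner (G y) (z - y) + inner (G z - G y) (z - y)"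
      by (simp add: inner_diff_left inner_diff_right)
    ultimately show ?thesis using 1 2 3 by (simp add: inner_diff_left)
  qed
  also have "inner (G y - G x) (z - y) = - (1 / (2 * L)) * (norm d)\<^sup>2"
    unfolding zy d_def by (simp add: power2_norm_eq_inner)
  also have "L * (norm (z - y))\<^sup>2 = (1 / (4 * L)) * (norm d)\<^sup>2"
    unfolding zy using L by (simp add: power2_eq_square field_simps)
  finally have "(1 / (4 * L)) * (norm d)\<^sup>2 \<le> F y - F x - inner (G x) (y - x)"
    using L by (simp add: field_simps)
  then show ?thesis unfolding d_def using L by (simp add: field_simps)
qed

lemma rho_set_bdd:
  "bdd_above {sqrt (\<Sum>i<n. (\<Sum>j<n. (W i j - 1 / real n) * v j)\<^sup>2) | v. (\<Sum>j<n. (v j)\<^sup>2) \<le> 1}"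
proof -
  let ?B = "sqrt (\<Sum>i<n. (\<Sum>j<n. \<bar>W i j - 1 / real n\<bar>)\<^sup>2)"
  show ?thesis unfolding bdd_above_def
  proof (intro exI[of _ ?B] ballI)
    fix r assume "r \<in> {sqrt (\<Sum>i<n. (\<Sum>j<n. (W i j - 1 / real n) * v j)\<^sup>2) | v. (\<Sum>j<n. (v j)\<^sup>2) \<le> 1}"
    then obtain v where r: "r = sqrt (\<Sum>i<n. (\<Sum>j<n. (W i j - 1 / real n) * v j)\<^sup>2)"
      and v: "(\<Sum>j<n. (v j)\<^sup>2) \<le> 1" by blast
    have vj: "\<bar>v j\<bar> \<le> 1" if "j < n" for j
    proof -
      have "(v j)\<^sup>2 \<le> (\<Sum>j<n. (v j)\<^sup>2)"
        using that by (intro member_le_sum) auto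
      then have "(v j)\<^sup>2 \<le> 1\<^sup>2" using v by simp
      then show ?thesis by (metis abs_le_square_iff abs_one)
    qed
    have "(\<Sum>j<n. (W i j - 1 / real n) * v j)\<^sup>2 \<le> (\<Sum>j<n. \<bar>W i j - 1 / real n\<bar>)\<^sup>2" for i
    proof -
      have "\<bar>\<Sum>j<n. (W i j - 1 / real n) * v j\<bar> \<le> (\<Sum>j<n. \<bar>(W i j - 1 / real n) * v j\<bar>)"
        by (rule sum_abs)
      also have "\<dots> \<le> (\<Sum>j<n. \<bar>W i j - 1 / real n\<bar>)"
      proof (rule sum_mono)
        fix j assume "j \<in> {..<n}"
        then have "\<bar>v j\<bar> \<le> 1" using vj by simp
        then have "\<bar>W i j - 1 / real n\<bar> * \<bar>v j\<bar> \<le> \<bar>W i j - 1 / real n\<bar> * 1"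
          by (intro mult_left_mono) auto
        then show "\<bar>(W i j - 1 / real n) * v j\<bar> \<le> \<bar>W i j - 1 / real n\<bar>" by (simp add: abs_mult)
      qed
      finally have c: "\<bar>\<Sum>j<n. (W i j - 1 / real n) * v j\<bar> \<le> (\<Sum>j<n. \<bar>W i j - 1 / real n\<bar>)" .
      have "\<bar>\<Sum>j<n. (W i j - 1 / real n) * v j\<bar>\<^sup>2 \<le> (\<Sum>j<n. \<bar>W i j - 1 / real n\<bar>)\<^sup>2"
        by (rule power_mono[OF c abs_ge_zero])
      then show ?thesis by simp
    qed
    then show "r \<le> ?B" unfolding r by (intro real_sqrt_le_mono sum_mono) auto
  qed
qed

lemma rho_nonneg: "0 \<le> rho_w n W"
proof -
  have "sqrt (\<Sum>i<n. (\<Sum>j<n. (W i j - 1 / real n) * (0::real))\<^sup>2) \<in>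
        {sqrt (\<Sum>i<n. (\<Sum>j<n. (W i j - 1 / real n) * v j)\<^sup>2) | v. (\<Sum>j<n. (v j)\<^sup>2) \<le> 1}"
    by (intro CollectI exI[of _ "\<lambda>_. 0"]) simp
  from cSup_upper[OF this rho_set_bdd] show ?thesis unfolding rho_w_def by simp
qed

lemma rho_scalar:
  fixes v :: "nat \<Rightarrow> real"
  shows "(\<Sum>i<n. (\<Sum>j<n. (W i j - 1 / real n) * v j)\<^sup>2) \<le> (rho_w n W)\<^sup>2 * (\<Sum>j<n. (v j)\<^sup>2)"
proof (cases "(\<Sum>j<n. (v j)\<^sup>2) = 0")
  case True
  then have "\<forall>j<n. v j = 0" by (simp add: sum_nonneg_eq_0_iff)
  then show ?thesis by simp
next
  case False
  define S where "S = (\<Sum>j<n. (v j)\<^sup>2)"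
  have "S \<ge> 0" unfolding S_def by (simp add: sum_nonneg)
  with False have Spos: "S > 0" unfolding S_def by simp
  define u where "u j = v j / sqrt S" for j
  have "(\<Sum>j<n. (u j)\<^sup>2) = 1"
    using Spos unfolding u_def by (simp add: power_divide sum_divide_distrib[symmetric] S_def)
  then have "sqrt (\<Sum>i<n. (\<Sum>j<n. (W i j - 1 / real n) * u j)\<^sup>2) \<in>
        {sqrt (\<Sum>i<n. (\<Sum>j<n. (W i j - 1 / real n) * v j)\<^sup>2) | v. (\<Sum>j<n. (v j)\<^sup>2) \<le> 1}"
    by (intro CollectI exI[of _ u]) simp
  from cSup_upper[OF this rho_set_bdd]
  have "sqrt (\<Sum>i<n. (\<Sum>j<n. (W i j - 1 / real n) * u j)\<^sup>2) \<le> rho_w n W" unfolding rho_w_def by simp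
  then have A0: "(sqrt (\<Sum>i<n. (\<Sum>j<n. (W i j - 1 / real n) * u j)\<^sup>2))\<^sup>2 \<le> (rho_w n W)\<^sup>2"
    by (rule power_mono) (simp_all add: sum_nonneg)
  have A: "(\<Sum>i<n. (\<Sum>j<n. (W i j - 1 / real n) * u j)\<^sup>2) \<le> (rho_w n W)\<^sup>2"
    using A0 by (simp add: sum_nonneg)
  have e: "(\<Sum>j<n. (W i j - 1 / real n) * u j) = (\<Sum>j<n. (W i j - 1 / real n) * v j) / sqrt S" for i
    unfolding u_def by (simp add: sum_divide_distrib)
  have "(\<Sum>i<n. (\<Sum>j<n. (W i j - 1 / real n) * u j)\<^sup>2) = (\<Sum>i<n. ((\<Sum>j<n. (W i j - 1 / real n) * v j) / sqrt S)\<^sup>2)"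
    by (simp only: e)
  also have "\<dots> = (\<Sum>i<n. (\<Sum>j<n. (W i j - 1 / real n) * v j)\<^sup>2 / S)"
    using Spos by (simp only: power_divide real_sqrt_pow2 less_imp_le)
  also have "\<dots> = (\<Sum>i<n. (\<Sum>j<n. (W i j - 1 / real n) * v j)\<^sup>2) / S"
    by (rule sum_divide_distrib[symmetric])
  finally have "(\<Sum>i<n. (\<Sum>j<n. (W i j - 1 / real n) * u j)\<^sup>2) = (\<Sum>i<n. (\<Sum>j<n. (W i j - 1 / real n) * v j)\<^sup>2) / S" .
  with A have "(\<Sum>i<n. (\<Sum>j<n. (W i j - 1 / real n) * v j)\<^sup>2) / S \<le> (rho_w n W)\<^sup>2" by simp
  then show ?thesis using Spos unfolding S_def[symmetric] by (simp add: pos_divide_le_eq)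
qed

lemma rho_vector:
  fixes w :: "nat \<Rightarrow> 'a::euclidean_space"
  shows "(\<Sum>i<n. (norm (\<Sum>j<n. (W i j - 1 / real n) *\<^sub>R w j))\<^sup>2) \<le> (rho_w n W)\<^sup>2 * (\<Sum>j<n. (norm (w j))\<^sup>2)"
proof -
  have nsq: "(norm (z::'a))\<^sup>2 = (\<Sum>b\<in>Basis. (inner z b)\<^sup>2)" for z
  proof -
    have "(norm z)\<^sup>2 = inner z z" by (rule power2_norm_eq_inner)
    also have "\<dots> = (\<Sum>b\<in>Basis. inner z b * inner z b)" by (rule euclidean_inner)
    finally show ?thesis by (simp only: power2_eq_square)
  qed
  have i1: "inner (\<Sum>j<n. (W i j - 1 / real n) *\<^sub>R w j) b = (\<Sum>j<n. (W i j - 1 / real n) * inner (w j) b)" for i b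
    by (simp add: inner_sum_left)
  have "(\<Sum>i<n. (norm (\<Sum>j<n. (W i j - 1 / real n) *\<^sub>R w j))\<^sup>2)
      = (\<Sum>i<n. \<Sum>b\<in>Basis. (\<Sum>j<n. (W i j - 1 / real n) * inner (w j) b)\<^sup>2)"
    by (simp only: nsq i1)
  also have "\<dots> = (\<Sum>b\<in>Basis. \<Sum>i<n. (\<Sum>j<n. (W i j - 1 / real n) * inner (w j) b)\<^sup>2)"
    by (rule sum.swap)
  also have "\<dots> \<le> (\<Sum>b\<in>Basis. (rho_w n W)\<^sup>2 * (\<Sum>j<n. (inner (w j) b)\<^sup>2))"
    by (intro sum_mono rho_scalar)
  also have "\<dots> = (rho_w n W)\<^sup>2 * (\<Sum>b\<in>Basis. \<Sum>j<n. (inner (w j) b)\<^sup>2)"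
    by (simp only: sum_distrib_left)
  also have "(\<Sum>b\<in>Basis. \<Sum>j<n. (inner (w j) b)\<^sup>2) = (\<Sum>j<n. \<Sum>b\<in>Basis. (inner (w j) b)\<^sup>2)"
    by (rule sum.swap)
  also have "\<dots> = (\<Sum>j<n. (norm (w j))\<^sup>2)"
    by (simp only: nsq)
  finally show ?thesis .
qed

lemma avg_step:
  fixes x :: "nat \<Rightarrow> 'a::real_vector"
  assumes W_sym: "\<forall>i<n. \<forall>j<n. W i j = W j i"
    and W_stoch: "\<forall>i<n. (\<Sum>j<n. W i j) = 1"
  shows "avg n (\<lambda>i. \<Sum>j<n. W i j *\<^sub>R z j) = avg n z"
proof -
  have col: "(\<Sum>i<n. W i j) = 1" if "j < n" for j
    using W_stoch W_sym that by (metis (no_types, lifting) lessThan_iff sum.cong)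
  have "(\<Sum>i<n. \<Sum>j<n. W i j *\<^sub>R z j) = (\<Sum>j<n. \<Sum>i<n. W i j *\<^sub>R z j)" by (rule sum.swap)
  also have "\<dots> = (\<Sum>j<n. (\<Sum>i<n. W i j) *\<^sub>R z j)" by (simp add: scaleR_sum_left)
  also have "\<dots> = (\<Sum>j<n. z j)" by (intro sum.cong) (simp_all add: col)
  finally show ?thesis unfolding avg_def by simp
qed

lemma cons_step:
  fixes z :: "nat \<Rightarrow> 'a::euclidean_space"
  assumes n: "n \<ge> 1"
    and W_sym: "\<forall>i<n. \<forall>j<n. W i j = W j i"
    and W_stoch: "\<forall>i<n. (\<Sum>j<n. W i j) = 1"
  shows "cons_err n (\<lambda>i. \<Sum>j<n. W i j *\<^sub>R z j) \<le> (rho_w n W)\<^sup>2 * cons_err n z"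
proof -
  let ?X = "\<lambda>i. \<Sum>j<n. W i j *\<^sub>R z j"
  let ?m = "avg n z"
  have aX: "avg n ?X = ?m" by (rule avg_step[OF W_sym W_stoch])
  have dev: "?X i - ?m = (\<Sum>j<n. (W i j - 1 / real n) *\<^sub>R (z j - ?m))" if "i < n" for i
  proof -
    have "(\<Sum>j<n. (W i j - 1 / real n) *\<^sub>R (z j - ?m))
        = (\<Sum>j<n. W i j *\<^sub>R (z j - ?m)) - (\<Sum>j<n. (1 / real n) *\<^sub>R (z j - ?m))"
      by (simp only: scaleR_diff_left sum_subtractf)
    also have "(\<Sum>j<n. (1 / real n) *\<^sub>R (z j - ?m)) = (1 / real n) *\<^sub>R (\<Sum>j<n. (z j - ?m))"
      by (rule scaleR_sum_right[symmetric])
    also have "(\<Sum>j<n. (z j - ?m)) = 0" by (rule sum_dev_zero[OF n])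
    also have "(\<Sum>j<n. W i j *\<^sub>R (z j - ?m)) = ?X i - (\<Sum>j<n. W i j) *\<^sub>R ?m"
      by (simp add: scaleR_diff_right sum_subtractf scaleR_sum_left)
    also have "(\<Sum>j<n. W i j) = 1" using W_stoch that by simp
    finally show ?thesis by simp
  qed
  have "cons_err n ?X = (\<Sum>i<n. (norm (\<Sum>j<n. (W i j - 1 / real n) *\<^sub>R (z j - ?m)))\<^sup>2)"
    unfolding cons_err_def aX by (intro sum.cong) (simp_all add: dev)
  also have "\<dots> \<le> (rho_w n W)\<^sup>2 * (\<Sum>j<n. (norm (z j - ?m))\<^sup>2)" by (rule rho_vector)
  finally show ?thesis unfolding cons_err_def .
qed

lemma xstar_Suc:
  "xstar_bar n g a \<sigma>t xs (Suc l) = xstar_bar n g a \<sigma>t xs l - a *\<^sub>R ((1 / real n) *\<^sub>R (\<Sum>i<n. g i (\<sigma>t i l) xs))"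
  unfolding xstar_bar_def by (simp add: algebra_simps)

lemma avg_diff: "avg n (\<lambda>j. p j - q j) = avg n p - avg n (q :: nat \<Rightarrow> 'a::real_vector)"
  unfolding avg_def by (simp add: sum_subtractf scaleR_diff_right)

lemma avg_scale: "avg n (\<lambda>j. c *\<^sub>R p j) = c *\<^sub>R avg n (p :: nat \<Rightarrow> 'a::real_vector)"
  unfolding avg_def by (simp add: scaleR_sum_right[symmetric])

lemma avg_part:
  fixes x :: "nat \<Rightarrow> 'a::euclidean_space" and F :: "nat \<Rightarrow> 'a \<Rightarrow> real" and G :: "nat \<Rightarrow> 'a \<Rightarrow> 'a"
  assumes n: "n \<ge> 1"
    and W_sym: "\<forall>i<n. \<forall>j<n. W i j = W j i"
    and W_stoch: "\<forall>i<n. (\<Sum>j<n. W i j) = 1"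
    and sc: "\<And>i x y. i < n \<Longrightarrow> F i y \<ge> F i x + inner (G i x) (y - x) + \<mu> / 2 * (norm (y - x))\<^sup>2"
    and lip: "\<And>i x y. i < n \<Longrightarrow> norm (G i x - G i y) \<le> L * norm (x - y)"
    and mu: "\<mu> > 0" and a: "a > 0" and aL: "a * L\<^sup>2 \<le> \<mu>" and L: "L > 0"
  shows "(norm (avg n (\<lambda>i. \<Sum>j<n. W i j *\<^sub>R (x j - a *\<^sub>R G j (x j)))
              - (y - a *\<^sub>R ((1 / real n) *\<^sub>R (\<Sum>i<n. G i xs)))))\<^sup>2
       \<le> (1 - a * \<mu>) * (norm (avg n x - y))\<^sup>2
         + 2 * a * ((1 / real n) * (\<Sum>i<n. F i y) - (1 / real n) * (\<Sum>i<n. F i xs)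
                     - inner ((1 / real n) *\<^sub>R (\<Sum>i<n. G i xs)) (y - xs))
         + (2 * a * L + a\<^sup>2 * L\<^sup>2) / real n * cons_err n x"
proof -
  define xb where "xb = avg n x"
  define u where "u j = G j (x j)" for j
  define v where "v j = G j xs" for j
  define ub where "ub = avg n u"
  define vb where "vb = avg n v"
  define \<delta> where "\<delta> = xb - y"
  define D where "D = (1 / real n) * (\<Sum>i<n. F i y) - (1 / real n) * (\<Sum>i<n. F i xs) - inner vb (y - xs)"
  define Dx where "Dx = (1 / real n) * (\<Sum>i<n. F i xb) - (1 / real n) * (\<Sum>i<n. F i xs) - inner vb (xb - xs)"
  define E where "E = cons_err n x"
  have nr: "real n > 0" using n by simp
  have vb_eq: "(1 / real n) *\<^sub>R (\<Sum>i<n. G i xs) = vb" unfolding vb_def avg_def v_def ..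
  have aX: "avg n (\<lambda>i. \<Sum>j<n. W i j *\<^sub>R (x j - a *\<^sub>R G j (x j))) = xb - a *\<^sub>R ub"
    unfolding avg_step[OF W_sym W_stoch] avg_diff avg_scale xb_def ub_def u_def ..
  have diff: "avg n (\<lambda>i. \<Sum>j<n. W i j *\<^sub>R (x j - a *\<^sub>R G j (x j))) - (y - a *\<^sub>R vb)
      = \<delta> - a *\<^sub>R (ub - vb)"
    unfolding aX \<delta>_def by (simp add: algebra_simps)
  have sq: "(norm (\<delta> - a *\<^sub>R (ub - vb)))\<^sup>2 = (norm \<delta>)\<^sup>2 - 2 * a * inner (ub - vb) \<delta> + a\<^sup>2 * (norm (ub - vb))\<^sup>2"
    using norm_minus_sq[of \<delta> "a *\<^sub>R (ub - vb)"] by (simp add: inner_commute power_mult_distrib)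
  have per_i: "inner (u i - v i) \<delta> \<ge> F i xb - F i y - inner (v i) \<delta> - L * (norm (x i - xb))\<^sup>2
                + \<mu> / 2 * (norm (y - x i))\<^sup>2" if i: "i < n" for i
  proof -
    have s1: "F i y \<ge> F i (x i) + inner (u i) (y - x i) + \<mu> / 2 * (norm (y - x i))\<^sup>2"
      using sc[OF i] unfolding u_def by blast
    have s2: "F i (x i) \<ge> F i xb + inner (G i xb) (x i - xb) + \<mu> / 2 * (norm (x i - xb))\<^sup>2"
      using sc[OF i] by blast
    have s3: "inner (G i xb - u i) (x i - xb) \<ge> - (L * (norm (x i - xb))\<^sup>2)"
    proof -
      have "\<bar>inner (G i xb - u i) (x i - xb)\<bar> \<le> norm (G i xb - u i) * norm (x i - xb)"
        by (rule Cauchy_Schwarz_ineq2)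
      also have "\<dots> \<le> L * norm (xb - x i) * norm (x i - xb)"
        unfolding u_def by (intro mult_right_mono lip[OF i]) simp
      finally show ?thesis by (simp add: norm_minus_commute power2_eq_square)
    qed
    have e1: "inner (u i) \<delta> = inner (u i) (xb - x i) - inner (u i) (y - x i)"
      unfolding \<delta>_def by (simp add: inner_diff_right)
    have e2: "inner (G i xb - u i) (x i - xb) = inner (G i xb) (x i - xb) + inner (u i) (xb - x i)"
      by (simp add: inner_diff_left inner_diff_right)
    have "0 \<le> \<mu> / 2 * (norm (x i - xb))\<^sup>2" using mu by simp
    then show ?thesis using s1 s2 s3 e1 e2 by (simp add: inner_diff_left)
  qed
  have sum_inner: "(\<Sum>i<n. inner (u i - v i) \<delta>) = real n * inner (ub - vb) \<delta>"
  proof -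
    have "(\<Sum>i<n. inner (u i - v i) \<delta>) = inner (\<Sum>i<n. u i - v i) \<delta>" by (simp add: inner_sum_left)
    also have "(\<Sum>i<n. u i - v i) = real n *\<^sub>R avg n (\<lambda>i. u i - v i)" using nr by (simp add: avg_def)
    also have "avg n (\<lambda>i. u i - v i) = ub - vb" unfolding avg_diff ub_def vb_def ..
    finally show ?thesis by simp
  qed
  have sumsq_y: "(\<Sum>i<n. (norm (y - x i))\<^sup>2) \<ge> real n * (norm \<delta>)\<^sup>2"
  proof -
    have "(\<Sum>i<n. (norm (y - x i))\<^sup>2) = (\<Sum>i<n. (norm (x i - y))\<^sup>2)" by (simp add: norm_minus_commute)
    also have "\<dots> = E + real n * (norm \<delta>)\<^sup>2" unfolding sum_sq_decomp[OF n] E_def \<delta>_def xb_def ..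
    moreover have "E \<ge> 0" unfolding E_def cons_err_def by (simp add: sum_nonneg)
    ultimately show ?thesis by simp
  qed
  have sumF: "(\<Sum>i<n. F i xb - F i y - inner (v i) \<delta>) = real n * (Dx - D)"
  proof -
    have "(\<Sum>i<n. inner (v i) \<delta>) = real n * inner vb \<delta>"
    proof -
      have "(\<Sum>i<n. inner (v i) \<delta>) = inner (\<Sum>i<n. v i) \<delta>" by (simp add: inner_sum_left)
      also have "(\<Sum>i<n. v i) = real n *\<^sub>R vb" using nr by (simp add: avg_def vb_def)
      finally show ?thesis by simp
    qed
    moreover have "inner vb \<delta> = inner vb (xb - xs) - inner vb (y - xs)"
      unfolding \<delta>_def by (simp add: inner_diff_right)
    moreover have "(\<Sum>i<n. F i xb - F i y - inner (v i) \<delta>) = (\<Sum>i<n. F i xb) - (\<Sum>i<n. F i y) - (\<Sum>i<n. inner (v i) \<delta>)"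
      by (simp only: sum_subtractf)
    ultimately show ?thesis unfolding Dx_def D_def using nr
      by (simp add: right_diff_distrib distrib_left)
  qed
  have lower: "real n * inner (ub - vb) \<delta> \<ge> real n * (Dx - D) - L * E + \<mu> / 2 * (real n * (norm \<delta>)\<^sup>2)"
  proof -
    have "(\<Sum>i<n. inner (u i - v i) \<delta>) \<ge> (\<Sum>i<n. (F i xb - F i y - inner (v i) \<delta>) - L * (norm (x i - xb))\<^sup>2
                + \<mu> / 2 * (norm (y - x i))\<^sup>2)"
      by (intro sum_mono) (use per_i in auto)
    also have "(\<Sum>i<n. (F i xb - F i y - inner (v i) \<delta>) - L * (norm (x i - xb))\<^sup>2 + \<mu> / 2 * (norm (y - x i))\<^sup>2)
        = real n * (Dx - D) - L * E + \<mu> / 2 * (\<Sum>i<n. (norm (y - x i))\<^sup>2)"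
    proof -
      obtain fA where fA: "fA = (\<lambda>i. F i xb - F i y - inner (v i) \<delta>)" by blast
      have "(\<Sum>i<n. fA i - L * (norm (x i - xb))\<^sup>2 + \<mu> / 2 * (norm (y - x i))\<^sup>2)
          = (\<Sum>i<n. fA i) - L * (\<Sum>i<n. (norm (x i - xb))\<^sup>2) + \<mu> / 2 * (\<Sum>i<n. (norm (y - x i))\<^sup>2)"
        by (simp add: sum.distrib sum_subtractf sum_distrib_left)
      moreover have Ee: "E = (\<Sum>i<n. (norm (x i - xb))\<^sup>2)" unfolding E_def cons_err_def xb_def ..
      ultimately show ?thesis unfolding fA using sumF by simp
    qed
    finally show ?thesis unfolding sum_inner using sumsq_y mu
      by (smt (verit) mult_left_mono divide_nonneg_pos)
  qed
  then have lower': "inner (ub - vb) \<delta> \<ge> (Dx - D) - L * E / real n + \<mu> / 2 * (norm \<delta>)\<^sup>2"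
    using nr by (simp add: field_simps)
  have Dx_lb: "Dx \<ge> \<mu> / 2 * (norm (xb - xs))\<^sup>2"
  proof -
    have "(\<Sum>i<n. F i xb) \<ge> (\<Sum>i<n. F i xs + inner (v i) (xb - xs) + \<mu> / 2 * (norm (xb - xs))\<^sup>2)"
      by (intro sum_mono) (use sc in \<open>auto simp: v_def\<close>)
    also have "(\<Sum>i<n. F i xs + inner (v i) (xb - xs) + \<mu> / 2 * (norm (xb - xs))\<^sup>2)
        = (\<Sum>i<n. F i xs) + inner (\<Sum>i<n. v i) (xb - xs) + real n * (\<mu> / 2 * (norm (xb - xs))\<^sup>2)"
      by (simp add: sum.distrib inner_sum_left)
    also have "(\<Sum>i<n. v i) = real n *\<^sub>R vb" using nr by (simp add: avg_def vb_def)
    finally have "(\<Sum>i<n. F i xb) \<ge> (\<Sum>i<n. F i xs) + real n * inner vb (xb - xs) + real n * (\<mu> / 2 * (norm (xb - xs))\<^sup>2)"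
      by simp
    then show ?thesis unfolding Dx_def using nr by (simp add: field_simps)
  qed
  have gd: "(norm (ub - vb))\<^sup>2 \<le> L\<^sup>2 * (E / real n + (norm (xb - xs))\<^sup>2)"
  proof -
    have "(norm (ub - vb))\<^sup>2 = (norm (avg n (\<lambda>i. u i - v i)))\<^sup>2" unfolding avg_diff ub_def vb_def ..
    also have "\<dots> \<le> (1 / real n) * (\<Sum>i<n. (norm (u i - v i))\<^sup>2)" by (rule norm_avg_sq_le[OF n])
    also have "\<dots> \<le> (1 / real n) * (\<Sum>i<n. L\<^sup>2 * (norm (x i - xs))\<^sup>2)"
    proof -
      have "(norm (u i - v i))\<^sup>2 \<le> L\<^sup>2 * (norm (x i - xs))\<^sup>2" if "i < n" for i
      proof -
        have "norm (u i - v i) \<le> L * norm (x i - xs)" unfolding u_def v_def by (rule lip[OF that])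
        then have "(norm (u i - v i))\<^sup>2 \<le> (L * norm (x i - xs))\<^sup>2" by (intro power_mono) auto
        then show ?thesis by (simp add: power_mult_distrib)
      qed
      then show ?thesis using nr by (intro mult_left_mono sum_mono) auto
    qed
    also have "(\<Sum>i<n. L\<^sup>2 * (norm (x i - xs))\<^sup>2) = L\<^sup>2 * (E + real n * (norm (xb - xs))\<^sup>2)"
      unfolding sum_distrib_left[symmetric] sum_sq_decomp[OF n] E_def xb_def ..
    finally show ?thesis using nr by (simp add: field_simps)
  qed
  have c1: "2 * a * inner (ub - vb) \<delta> \<ge> 2 * a * ((Dx - D) - L * E / real n + \<mu> / 2 * (norm \<delta>)\<^sup>2)"
    using lower' a by simp
  have c2: "a\<^sup>2 * (norm (ub - vb))\<^sup>2 \<le> a\<^sup>2 * (L\<^sup>2 * (E / real n + (norm (xb - xs))\<^sup>2))"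
    using gd by (simp add: mult_left_mono)
  have c3: "a\<^sup>2 * L\<^sup>2 * (norm (xb - xs))\<^sup>2 \<le> 2 * a * Dx"
  proof -
    have "a\<^sup>2 * L\<^sup>2 * (norm (xb - xs))\<^sup>2 = a * (a * L\<^sup>2) * (norm (xb - xs))\<^sup>2" by (simp add: power2_eq_square)
    also have "\<dots> \<le> a * \<mu> * (norm (xb - xs))\<^sup>2" using aL a by (simp add: mult_left_mono mult_right_mono)
    also have "\<dots> \<le> 2 * a * Dx" using Dx_lb a by (simp add: mult_left_mono)
    finally show ?thesis .
  qed
  have "(norm (\<delta> - a *\<^sub>R (ub - vb)))\<^sup>2 \<le> (1 - a * \<mu>) * (norm \<delta>)\<^sup>2 + 2 * a * D + (2 * a * L + a\<^sup>2 * L\<^sup>2) / real n * E"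
  proof -
    define En where "En = E / real n"
    have c1': "2 * a * inner (ub - vb) \<delta> \<ge> 2 * a * Dx - 2 * a * D - 2 * a * L * En + a * \<mu> * (norm \<delta>)\<^sup>2"
      using c1 unfolding En_def by (simp add: algebra_simps)
    have c2': "a\<^sup>2 * (norm (ub - vb))\<^sup>2 \<le> a\<^sup>2 * L\<^sup>2 * En + a\<^sup>2 * L\<^sup>2 * (norm (xb - xs))\<^sup>2"
      using c2 unfolding En_def by (simp add: algebra_simps)
    have ge: "(2 * a * L + a\<^sup>2 * L\<^sup>2) / real n * E = 2 * a * L * En + a\<^sup>2 * L\<^sup>2 * En"
      unfolding En_def by (simp add: field_simps add_divide_distrib)
    show ?thesis unfolding sq ge using c1' c2' c3 by (simp add: algebra_simps)
  qed
  then show ?thesis unfolding vb_eq diff D_def E_def \<delta>_def xb_def .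
qed

lemma rho_split_real:
  fixes \<rho> p r :: real
  assumes "0 \<le> \<rho>" "\<rho>\<^sup>2 < 1" "0 \<le> r"
  shows "\<rho>\<^sup>2 * (p + r)\<^sup>2 \<le> (1 + \<rho>\<^sup>2) / 2 * p\<^sup>2 + 2 * \<rho>\<^sup>2 / (1 - \<rho>\<^sup>2) * r\<^sup>2"
proof -
  define s where "s = 1 - \<rho>\<^sup>2"
  have s: "s > 0" using assms unfolding s_def by simp
  have id: "s * ((1 + \<rho>\<^sup>2) / 2 * p\<^sup>2 + 2 * \<rho>\<^sup>2 / s * r\<^sup>2 - \<rho>\<^sup>2 * (p + r)\<^sup>2)
      = (1/2) * (s * p - 2 * \<rho>\<^sup>2 * r)\<^sup>2 + \<rho>\<^sup>2 * s * r\<^sup>2"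
    using s unfolding s_def by (simp add: field_simps power2_eq_square)
  have "0 \<le> (1/2) * (s * p - 2 * \<rho>\<^sup>2 * r)\<^sup>2 + \<rho>\<^sup>2 * s * r\<^sup>2" using s by simp
  then have "0 \<le> s * ((1 + \<rho>\<^sup>2) / 2 * p\<^sup>2 + 2 * \<rho>\<^sup>2 / s * r\<^sup>2 - \<rho>\<^sup>2 * (p + r)\<^sup>2)" by (simp only: id)
  then have "0 \<le> (1 + \<rho>\<^sup>2) / 2 * p\<^sup>2 + 2 * \<rho>\<^sup>2 / s * r\<^sup>2 - \<rho>\<^sup>2 * (p + r)\<^sup>2"
    using s by (simp add: zero_le_mult_iff)
  then show ?thesis unfolding s_def by simp
qed

lemma rho_split:
  fixes A B :: "'a::real_normed_vector"
  assumes "0 \<le> \<rho>" "\<rho>\<^sup>2 < 1"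
  shows "\<rho>\<^sup>2 * (norm (A - B))\<^sup>2 \<le> (1 + \<rho>\<^sup>2) / 2 * (norm A)\<^sup>2 + 2 * \<rho>\<^sup>2 / (1 - \<rho>\<^sup>2) * (norm B)\<^sup>2"
proof -
  have "(norm (A - B))\<^sup>2 \<le> (norm A + norm B)\<^sup>2"
    by (intro power_mono norm_triangle_ineq4) simp
  then have "\<rho>\<^sup>2 * (norm (A - B))\<^sup>2 \<le> \<rho>\<^sup>2 * (norm A + norm B)\<^sup>2" by (simp add: mult_left_mono)
  also have "\<dots> \<le> (1 + \<rho>\<^sup>2) / 2 * (norm A)\<^sup>2 + 2 * \<rho>\<^sup>2 / (1 - \<rho>\<^sup>2) * (norm B)\<^sup>2"
    by (rule rho_split_real[OF assms norm_ge_zero])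
  finally show ?thesis .
qed

lemma three_sq_real:
  fixes x y z :: real
  shows "(x + y + z)\<^sup>2 \<le> 3 * x\<^sup>2 + 3 * y\<^sup>2 + 3 * z\<^sup>2"
proof -
  have "3 * x\<^sup>2 + 3 * y\<^sup>2 + 3 * z\<^sup>2 - (x + y + z)\<^sup>2 = (x - y)\<^sup>2 + (y - z)\<^sup>2 + (x - z)\<^sup>2"
    by (simp add: power2_eq_square algebra_simps)
  moreover have "0 \<le> (x - y)\<^sup>2 + (y - z)\<^sup>2 + (x - z)\<^sup>2" by simp
  ultimately show ?thesis by linarith
qed

lemma three_sq:
  fixes p q r :: "'a::real_normed_vector"
  shows "(norm (p + q + r))\<^sup>2 \<le> 3 * (norm p)\<^sup>2 + 3 * (norm q)\<^sup>2 + 3 * (norm r)\<^sup>2"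
proof -
  have "(norm (p + q + r))\<^sup>2 \<le> (norm p + norm q + norm r)\<^sup>2"
    by (intro power_mono) (auto intro: order_trans[OF norm_triangle_ineq] add_right_mono)
  also have "\<dots> \<le> 3 * (norm p)\<^sup>2 + 3 * (norm q)\<^sup>2 + 3 * (norm r)\<^sup>2"
    by (rule three_sq_real)
  finally show ?thesis .
qed

lemma cons_part:
  fixes x :: "nat \<Rightarrow> 'a::euclidean_space" and F :: "nat \<Rightarrow> 'a \<Rightarrow> real" and G :: "nat \<Rightarrow> 'a \<Rightarrow> 'a"
  assumes n: "n \<ge> 1"
    and W_sym: "\<forall>i<n. \<forall>j<n. W i j = W j i"
    and W_stoch: "\<forall>i<n. (\<Sum>j<n. W i j) = 1"
    and sc: "\<And>i x y. i < n \<Longrightarrow> F i y \<ge> F i x + inner (G i x) (y - x)"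
    and lip: "\<And>i x y. i < n \<Longrightarrow> norm (G i x - G i y) \<le> L * norm (x - y)"
    and L: "L > 0" and rho1: "(rho_w n W)\<^sup>2 < 1"
  shows "cons_err n (\<lambda>i. \<Sum>j<n. W i j *\<^sub>R (x j - a *\<^sub>R G j (x j)))
       \<le> (1 + (rho_w n W)\<^sup>2) / 2 * cons_err n x
         + 2 * (rho_w n W)\<^sup>2 / (1 - (rho_w n W)\<^sup>2) * a\<^sup>2 *
           (3 * L\<^sup>2 * (cons_err n x + real n * (norm (avg n x - y))\<^sup>2)
            + 12 * L * real n * ((1 / real n) * (\<Sum>i<n. F i y) - (1 / real n) * (\<Sum>i<n. F i xs)
                     - inner ((1 / real n) *\<^sub>R (\<Sum>i<n. G i xs)) (y - xs))
            + 3 * (\<Sum>j<n. (norm (G j xs))\<^sup>2))"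
proof -
  define \<rho> where "\<rho> = rho_w n W"
  define \<beta> where "\<beta> = 2 * \<rho>\<^sup>2 / (1 - \<rho>\<^sup>2)"
  define u where "u j = G j (x j)" for j
  define v where "v j = G j xs" for j
  define z where "z j = x j - a *\<^sub>R u j" for j
  define xb where "xb = avg n x"
  define ub where "ub = avg n u"
  have nr: "real n > 0" using n by simp
  have r0: "0 \<le> \<rho>" unfolding \<rho>_def by (rule rho_nonneg)
  have r1: "\<rho>\<^sup>2 < 1" using rho1 unfolding \<rho>_def .
  have b0: "\<beta> \<ge> 0" unfolding \<beta>_def using r1 by simp
  have step1: "cons_err n (\<lambda>i. \<Sum>j<n. W i j *\<^sub>R z j) \<le> \<rho>\<^sup>2 * cons_err n z"
    unfolding \<rho>_def by (rule cons_step[OF n W_sym W_stoch])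
  have az: "avg n z = xb - a *\<^sub>R ub"
    unfolding z_def avg_diff avg_scale xb_def ub_def ..
  have step2: "\<rho>\<^sup>2 * cons_err n z \<le> (1 + \<rho>\<^sup>2) / 2 * cons_err n x + \<beta> * (a\<^sup>2 * cons_err n u)"
  proof -
    have "\<rho>\<^sup>2 * cons_err n z = (\<Sum>j<n. \<rho>\<^sup>2 * (norm ((x j - xb) - a *\<^sub>R (u j - ub)))\<^sup>2)"
      unfolding cons_err_def az sum_distrib_left
      by (intro sum.cong) (simp_all add: z_def algebra_simps)
    also have "\<dots> \<le> (\<Sum>j<n. (1 + \<rho>\<^sup>2) / 2 * (norm (x j - xb))\<^sup>2 + \<beta> * (norm (a *\<^sub>R (u j - ub)))\<^sup>2)"
      unfolding \<beta>_def by (intro sum_mono rho_split r0 r1)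
    also have "\<dots> = (1 + \<rho>\<^sup>2) / 2 * cons_err n x + \<beta> * (a\<^sup>2 * cons_err n u)"
      unfolding cons_err_def xb_def ub_def
      by (simp add: sum.distrib sum_distrib_left power_mult_distrib)
    finally show ?thesis .
  qed
  have step3: "cons_err n u \<le> (\<Sum>j<n. (norm (u j))\<^sup>2)" by (rule cons_le_sumsq[OF n])
  have step4: "(\<Sum>j<n. (norm (u j))\<^sup>2)
      \<le> 3 * L\<^sup>2 * (\<Sum>j<n. (norm (x j - y))\<^sup>2) + 3 * (\<Sum>j<n. (norm (G j y - v j))\<^sup>2) + 3 * (\<Sum>j<n. (norm (v j))\<^sup>2)"
  proof -
    have "(norm (u j))\<^sup>2 \<le> 3 * L\<^sup>2 * (norm (x j - y))\<^sup>2 + 3 * (norm (G j y - v j))\<^sup>2 + 3 * (norm (v j))\<^sup>2"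
      if j: "j < n" for j
    proof -
      have "u j = (u j - G j y) + (G j y - v j) + v j" by simp
      then have "(norm (u j))\<^sup>2 \<le> 3 * (norm (u j - G j y))\<^sup>2 + 3 * (norm (G j y - v j))\<^sup>2 + 3 * (norm (v j))\<^sup>2"
        using three_sq[of "u j - G j y" "G j y - v j" "v j"] by metis
      moreover have "(norm (u j - G j y))\<^sup>2 \<le> L\<^sup>2 * (norm (x j - y))\<^sup>2"
      proof -
        have "norm (u j - G j y) \<le> L * norm (x j - y)" unfolding u_def by (rule lip[OF j])
        then have "(norm (u j - G j y))\<^sup>2 \<le> (L * norm (x j - y))\<^sup>2" by (intro power_mono) auto
        then show ?thesis by (simp add: power_mult_distrib)
      qed
      ultimately show ?thesis by linarith
    qed
    then have "(\<Sum>j<n. (norm (u j))\<^sup>2) \<le> (\<Sum>j<n. 3 * L\<^sup>2 * (norm (x j - y))\<^sup>2 + 3 * (norm (G j y - v j))\<^sup>2 + 3 * (norm (v j))\<^sup>2)"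
      by (intro sum_mono) auto
    also have "\<dots> = 3 * L\<^sup>2 * (\<Sum>j<n. (norm (x j - y))\<^sup>2) + 3 * (\<Sum>j<n. (norm (G j y - v j))\<^sup>2) + 3 * (\<Sum>j<n. (norm (v j))\<^sup>2)"
      by (simp add: sum.distrib sum_distrib_left)
    finally show ?thesis .
  qed
  have step5: "(\<Sum>j<n. (norm (x j - y))\<^sup>2) = cons_err n x + real n * (norm (avg n x - y))\<^sup>2"
    by (rule sum_sq_decomp[OF n])
  define D where "D = (1 / real n) * (\<Sum>i<n. F i y) - (1 / real n) * (\<Sum>i<n. F i xs)
                     - inner ((1 / real n) *\<^sub>R (\<Sum>i<n. G i xs)) (y - xs)"
  have step6: "(\<Sum>j<n. (norm (G j y - v j))\<^sup>2) \<le> 4 * L * real n * D"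
  proof -
    have "(\<Sum>j<n. (norm (G j y - v j))\<^sup>2) \<le> (\<Sum>j<n. 4 * L * (F j y - F j xs - inner (v j) (y - xs)))"
      unfolding v_def by (intro sum_mono cocoerc[OF _ _ L]) (use sc lip in auto)
    also have "\<dots> = 4 * L * ((\<Sum>j<n. F j y) - (\<Sum>j<n. F j xs) - inner (\<Sum>j<n. v j) (y - xs))"
      by (simp add: sum_distrib_left[symmetric] sum_subtractf inner_sum_left)
    also have "\<dots> = 4 * L * real n * D"
      unfolding D_def v_def using nr by (simp add: field_simps inner_scaleR_left)
    finally show ?thesis .
  qed
  have "cons_err n (\<lambda>i. \<Sum>j<n. W i j *\<^sub>R (x j - a *\<^sub>R G j (x j))) \<le> \<rho>\<^sup>2 * cons_err n z"
    using step1 unfolding z_def u_def .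
  also have "\<dots> \<le> (1 + \<rho>\<^sup>2) / 2 * cons_err n x + \<beta> * (a\<^sup>2 * cons_err n u)" by (rule step2)
  also have "\<dots> \<le> (1 + \<rho>\<^sup>2) / 2 * cons_err n x + \<beta> * (a\<^sup>2 *
        (3 * L\<^sup>2 * (cons_err n x + real n * (norm (avg n x - y))\<^sup>2) + 12 * L * real n * D
         + 3 * (\<Sum>j<n. (norm (G j xs))\<^sup>2)))"
  proof -
    have "cons_err n u \<le> 3 * L\<^sup>2 * (cons_err n x + real n * (norm (avg n x - y))\<^sup>2) + 12 * L * real n * D
         + 3 * (\<Sum>j<n. (norm (G j xs))\<^sup>2)"
    proof -
      have e5: "3 * L\<^sup>2 * (\<Sum>j<n. (norm (x j - y))\<^sup>2) = 3 * L\<^sup>2 * (cons_err n x + real n * (norm (avg n x - y))\<^sup>2)"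
        by (simp only: step5)
      have "3 * (\<Sum>j<n. (norm (G j y - v j))\<^sup>2) \<le> 12 * L * real n * D" using step6 by (simp add: algebra_simps)
      then show ?thesis using step3 step4 e5 unfolding v_def by linarith
    qed
    then show ?thesis using b0 by (intro add_left_mono mult_left_mono) auto
  qed
  finally show ?thesis unfolding \<beta>_def \<rho>_def D_def by (simp add: mult.assoc)
qed

lemma coef_arith:
  fixes a \<mu> L \<rho> nn :: real
  assumes a: "a > 0" and mu: "\<mu> > 0" and muL: "\<mu> \<le> L" and r0: "0 \<le> \<rho>" and r1: "\<rho>\<^sup>2 < 1"
    and h1: "a * \<mu> \<le> (1 - \<rho>\<^sup>2) / 2"
    and h2: "1920 * a\<^sup>2 * L ^ 4 \<le> (1 - \<rho>\<^sup>2)\<^sup>2 * \<mu>\<^sup>2"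
    and h3: "48 * a\<^sup>2 * L\<^sup>2 * \<rho>\<^sup>2 \<le> (1 - \<rho>\<^sup>2)\<^sup>2"
    and nn: "nn > 0"
    and d0: "0 \<le> d2" and E0: "0 \<le> E" and D0: "0 \<le> D" and V0: "0 \<le> V"
    and AX: "AX \<le> (1 - a * \<mu>) * d2 + 2 * a * D + (2 * a * L + a\<^sup>2 * L\<^sup>2) / nn * E"
    and CX: "CX \<le> (1 + \<rho>\<^sup>2) / 2 * E + 2 * \<rho>\<^sup>2 / (1 - \<rho>\<^sup>2) * a\<^sup>2 *
              (3 * L\<^sup>2 * (E + nn * d2) + 12 * L * nn * D + 3 * V)"
  shows "AX + 16 * a * L\<^sup>2 / (nn * \<mu> * (1 - \<rho>\<^sup>2)) * CX
     \<le> (1 - a * \<mu> / 4) * (d2 + 16 * a * L\<^sup>2 / (nn * \<mu> * (1 - \<rho>\<^sup>2)) * E)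
        + 2 * (a * (1 + 240 * a\<^sup>2 * \<rho>\<^sup>2 * L ^ 3 / (\<mu> * (1 - \<rho>\<^sup>2)\<^sup>2)) * D
               + 120 * a ^ 3 * \<rho>\<^sup>2 * L\<^sup>2 / (\<mu> * (1 - \<rho>\<^sup>2)\<^sup>2) * (V / nn))"
proof -
  define s where "s = 1 - \<rho>\<^sup>2"
  have s: "s > 0" "s \<le> 1" using r1 unfolding s_def by simp_all
  have L: "L > 0" using mu muL by simp
  define \<omega> where "\<omega> = 16 * a * L\<^sup>2 / (nn * \<mu> * s)"
  define \<beta> where "\<beta> = 2 * \<rho>\<^sup>2 / s"
  have w0: "\<omega> \<ge> 0" unfolding \<omega>_def using a mu s nn by simp
  have b0: "\<beta> \<ge> 0" unfolding \<beta>_def using s by simp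
  have wb: "\<omega> * \<beta> = 32 * a * L\<^sup>2 * \<rho>\<^sup>2 / (nn * \<mu> * s\<^sup>2)"
    unfolding \<omega>_def \<beta>_def using s mu nn by (simp add: field_simps power2_eq_square)
  have tot: "AX + \<omega> * CX \<le> ((1 - a * \<mu>) + \<omega> * \<beta> * (3 * a\<^sup>2 * L\<^sup>2 * nn)) * d2
       + ((2 * a * L + a\<^sup>2 * L\<^sup>2) / nn + \<omega> * ((1 + \<rho>\<^sup>2) / 2) + \<omega> * \<beta> * (3 * a\<^sup>2 * L\<^sup>2)) * E
       + (2 * a + \<omega> * \<beta> * (12 * a\<^sup>2 * L * nn)) * D + (\<omega> * \<beta> * (3 * a\<^sup>2)) * V"
  proof -
    have "\<omega> * CX \<le> \<omega> * ((1 + \<rho>\<^sup>2) / 2 * E + \<beta> * a\<^sup>2 * (3 * L\<^sup>2 * (E + nn * d2) + 12 * L * nn * D + 3 * V))"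
      using CX w0 unfolding \<beta>_def s_def by (simp add: mult_left_mono)
    also have "\<dots> = \<omega> * ((1 + \<rho>\<^sup>2) / 2) * E + \<omega> * \<beta> * (3 * a\<^sup>2 * L\<^sup>2) * E + \<omega> * \<beta> * (3 * a\<^sup>2 * L\<^sup>2 * nn) * d2
        + \<omega> * \<beta> * (12 * a\<^sup>2 * L * nn) * D + \<omega> * \<beta> * (3 * a\<^sup>2) * V"
      by (simp add: algebra_simps)
    finally show ?thesis using AX by (simp add: algebra_simps)
  qed
  have cd: "(1 - a * \<mu>) + \<omega> * \<beta> * (3 * a\<^sup>2 * L\<^sup>2 * nn) \<le> 1 - a * \<mu> / 4"
  proof -
    have "\<omega> * \<beta> * (3 * a\<^sup>2 * L\<^sup>2 * nn) = 96 * a ^ 3 * L ^ 4 * \<rho>\<^sup>2 / (\<mu> * s\<^sup>2)"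
      unfolding wb using nn by (simp add: field_simps power2_eq_square power3_eq_cube power4_eq_xxxx)
    also have "\<dots> \<le> 3 * a * \<mu> / 4"
    proof -
      have "128 * a\<^sup>2 * L ^ 4 * \<rho>\<^sup>2 \<le> 1920 * a\<^sup>2 * L ^ 4 * 1"
        using r1 a L by (intro mult_mono) auto
      also have "\<dots> \<le> s\<^sup>2 * \<mu>\<^sup>2" using h2 unfolding s_def by simp
      finally have "128 * a\<^sup>2 * L ^ 4 * \<rho>\<^sup>2 \<le> s\<^sup>2 * \<mu>\<^sup>2" .
      then have "a * (128 * a\<^sup>2 * L ^ 4 * \<rho>\<^sup>2) \<le> a * (s\<^sup>2 * \<mu>\<^sup>2)" using a by simp
      then show ?thesis using s mu by (simp add: field_simps power2_eq_square power3_eq_cube power4_eq_xxxx)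
    qed
    finally have "\<omega> * \<beta> * (3 * a\<^sup>2 * L\<^sup>2 * nn) \<le> 3 * a * \<mu> / 4" .
    then show ?thesis by linarith
  qed
  have cD: "2 * a + \<omega> * \<beta> * (12 * a\<^sup>2 * L * nn) \<le> 2 * (a * (1 + 240 * a\<^sup>2 * \<rho>\<^sup>2 * L ^ 3 / (\<mu> * (1 - \<rho>\<^sup>2)\<^sup>2)))"
  proof -
    have "\<omega> * \<beta> * (12 * a\<^sup>2 * L * nn) = 384 * a ^ 3 * L ^ 3 * \<rho>\<^sup>2 / (\<mu> * s\<^sup>2)"
      unfolding wb using nn by (simp add: field_simps power2_eq_square power3_eq_cube)
    also have "\<dots> \<le> 480 * a ^ 3 * L ^ 3 * \<rho>\<^sup>2 / (\<mu> * s\<^sup>2)"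
      using a L mu s by (intro divide_right_mono mult_right_mono) auto
    finally show ?thesis unfolding s_def by (simp add: field_simps power2_eq_square power3_eq_cube)
  qed
  have cV: "\<omega> * \<beta> * (3 * a\<^sup>2) * V \<le> 2 * (120 * a ^ 3 * \<rho>\<^sup>2 * L\<^sup>2 / (\<mu> * (1 - \<rho>\<^sup>2)\<^sup>2) * (V / nn))"
  proof -
    have "\<omega> * \<beta> * (3 * a\<^sup>2) * V = 96 * (a ^ 3 * \<rho>\<^sup>2 * L\<^sup>2 / (\<mu> * s\<^sup>2) * (V / nn))"
      unfolding wb using nn by (simp add: field_simps power2_eq_square power3_eq_cube)
    also have "\<dots> \<le> 240 * (a ^ 3 * \<rho>\<^sup>2 * L\<^sup>2 / (\<mu> * s\<^sup>2) * (V / nn))"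
      using a mu s V0 nn by (intro mult_right_mono) auto
    finally show ?thesis unfolding s_def by (simp add: field_simps)
  qed
  have cE: "(2 * a * L + a\<^sup>2 * L\<^sup>2) / nn + \<omega> * ((1 + \<rho>\<^sup>2) / 2) + \<omega> * \<beta> * (3 * a\<^sup>2 * L\<^sup>2) \<le> (1 - a * \<mu> / 4) * \<omega>"
  proof -
    have aL1: "a * L \<le> 1"
    proof -
      have "1920 * (a * L)\<^sup>2 * L\<^sup>2 \<le> s\<^sup>2 * \<mu>\<^sup>2" using h2 unfolding s_def by (simp add: power_mult_distrib power4_eq_xxxx power2_eq_square mult_ac)
      also have "\<dots> \<le> 1 * L\<^sup>2" using s mu muL by (intro mult_mono power_mono) (auto simp: power_le_one)
      finally have X: "(1920 * (a * L)\<^sup>2) * L\<^sup>2 \<le> 1 * L\<^sup>2" by (simp add: mult_ac)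
      have "L\<^sup>2 > 0" using L by simp
      then have "1920 * (a * L)\<^sup>2 \<le> 1" using X by (rule mult_le_cancel_right_pos[THEN iffD1])
      then have "(a * L)\<^sup>2 \<le> 1\<^sup>2" by simp
      then show ?thesis using a L by (metis abs_le_square_iff abs_of_pos abs_one mult_pos_pos)
    qed
    have t1: "(2 * a * L + a\<^sup>2 * L\<^sup>2) / nn \<le> 3 * s / 16 * \<omega>"
    proof -
      have "(2 * a * L + a\<^sup>2 * L\<^sup>2) = a * L * (2 + a * L)" by (simp add: power2_eq_square algebra_simps)
      also have "\<dots> \<le> a * L * 3" using aL1 a L by (intro mult_left_mono) auto
      also have "\<dots> \<le> 3 * a * L\<^sup>2 / \<mu>" using a L mu muL by (simp add: field_simps power2_eq_square)
      finally have "(2 * a * L + a\<^sup>2 * L\<^sup>2) / nn \<le> (3 * a * L\<^sup>2 / \<mu>) / nn" using nn by (intro divide_right_mono) auto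
      also have "\<dots> = 3 * s / 16 * \<omega>" unfolding \<omega>_def using s mu nn by (simp add: field_simps)
      finally show ?thesis .
    qed
    have t2: "\<omega> * \<beta> * (3 * a\<^sup>2 * L\<^sup>2) \<le> s / 8 * \<omega>"
    proof -
      have "\<beta> * (3 * a\<^sup>2 * L\<^sup>2) = 6 * (a\<^sup>2 * L\<^sup>2 * \<rho>\<^sup>2) / s" unfolding \<beta>_def using s by (simp add: field_simps)
      also have "\<dots> \<le> 6 * (s\<^sup>2 / 48) / s" using h3 s unfolding s_def by (intro divide_right_mono) auto
      also have "\<dots> = s / 8" using s by (simp add: power2_eq_square)
      finally have "\<beta> * (3 * a\<^sup>2 * L\<^sup>2) \<le> s / 8" .
      then have "\<omega> * (\<beta> * (3 * a\<^sup>2 * L\<^sup>2)) \<le> \<omega> * (s / 8)" using w0 by (rule mult_left_mono)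
      then show ?thesis by (simp add: mult_ac)
    qed
    have t3: "\<omega> * ((1 + \<rho>\<^sup>2) / 2) = (1 - s / 2) * \<omega>" unfolding s_def by (simp add: field_simps)
    have t4: "(1 - s / 8) * \<omega> \<le> (1 - a * \<mu> / 4) * \<omega>"
      using h1 w0 unfolding s_def by (intro mult_right_mono) (auto simp: mult_ac)
    have "(1 - s / 2) * \<omega> + 3 * s / 16 * \<omega> + s / 8 * \<omega> \<le> (1 - s / 8) * \<omega>"
      using w0 s by (simp add: algebra_simps)
    then show ?thesis using t1 t2 t3 t4 by linarith
  qed
  have fin: "AX + \<omega> * CX \<le> (1 - a * \<mu> / 4) * d2 + ((1 - a * \<mu> / 4) * \<omega>) * E
      + 2 * (a * (1 + 240 * a\<^sup>2 * \<rho>\<^sup>2 * L ^ 3 / (\<mu> * (1 - \<rho>\<^sup>2)\<^sup>2))) * D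
      + 2 * (120 * a ^ 3 * \<rho>\<^sup>2 * L\<^sup>2 / (\<mu> * (1 - \<rho>\<^sup>2)\<^sup>2) * (V / nn))"
  proof -
    have 1: "((1 - a * \<mu>) + \<omega> * \<beta> * (3 * a\<^sup>2 * L\<^sup>2 * nn)) * d2 \<le> (1 - a * \<mu> / 4) * d2"
      using cd d0 by (rule mult_right_mono)
    have 2: "((2 * a * L + a\<^sup>2 * L\<^sup>2) / nn + \<omega> * ((1 + \<rho>\<^sup>2) / 2) + \<omega> * \<beta> * (3 * a\<^sup>2 * L\<^sup>2)) * E
        \<le> ((1 - a * \<mu> / 4) * \<omega>) * E"
      using cE E0 by (rule mult_right_mono)
    have 3: "(2 * a + \<omega> * \<beta> * (12 * a\<^sup>2 * L * nn)) * D \<le> 2 * (a * (1 + 240 * a\<^sup>2 * \<rho>\<^sup>2 * L ^ 3 / (\<mu> * (1 - \<rho>\<^sup>2)\<^sup>2))) * D"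
      using cD D0 by (rule mult_right_mono)
    show ?thesis using tot 1 2 3 cV by linarith
  qed
  show ?thesis using fin unfolding \<omega>_def s_def by (simp add: algebra_simps)
qed

lemma det_step:
  fixes x :: "nat \<Rightarrow> 'a::euclidean_space" and f :: "nat \<Rightarrow> nat \<Rightarrow> 'a \<Rightarrow> real" and g :: "nat \<Rightarrow> nat \<Rightarrow> 'a \<Rightarrow> 'a"
  assumes n: "n \<ge> 1"
    and W_sym: "\<forall>i<n. \<forall>j<n. W i j = W j i"
    and W_stoch: "\<forall>i<n. (\<Sum>j<n. W i j) = 1"
    and sc: "\<And>i x y. i < n \<Longrightarrow> f i (\<pi> i) y \<ge> f i (\<pi> i) x + inner (g i (\<pi> i) x) (y - x) + \<mu> / 2 * (norm (y - x))\<^sup>2"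
    and lip: "\<And>i x y. i < n \<Longrightarrow> norm (g i (\<pi> i) x - g i (\<pi> i) y) \<le> L * norm (x - y)"
    and a: "a > 0" and mu: "\<mu> > 0" and muL: "\<mu> \<le> L"
    and r1: "(rho_w n W)\<^sup>2 < 1"
    and h1: "a * \<mu> \<le> (1 - (rho_w n W)\<^sup>2) / 2"
    and h2: "1920 * a\<^sup>2 * L ^ 4 \<le> (1 - (rho_w n W)\<^sup>2)\<^sup>2 * \<mu>\<^sup>2"
    and h3: "48 * a\<^sup>2 * L\<^sup>2 * (rho_w n W)\<^sup>2 \<le> (1 - (rho_w n W)\<^sup>2)\<^sup>2"
  shows "(norm (avg n (drr_step n W g a \<pi> x) - (y - a *\<^sub>R ((1 / real n) *\<^sub>R (\<Sum>i<n. g i (\<pi> i) xs)))))\<^sup>2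
          + omega n L \<mu> (rho_w n W) a * cons_err n (drr_step n W g a \<pi> x)
     \<le> (1 - a * \<mu> / 4) * ((norm (avg n x - y))\<^sup>2 + omega n L \<mu> (rho_w n W) a * cons_err n x)
        + 2 * (a * (1 + 240 * a\<^sup>2 * (rho_w n W)\<^sup>2 * L ^ 3 / (\<mu> * (1 - (rho_w n W)\<^sup>2)\<^sup>2))
                 * ((1 / real n) * (\<Sum>i<n. f i (\<pi> i) y) - (1 / real n) * (\<Sum>i<n. f i (\<pi> i) xs)
                     - inner ((1 / real n) *\<^sub>R (\<Sum>i<n. g i (\<pi> i) xs)) (y - xs))
               + 120 * a ^ 3 * (rho_w n W)\<^sup>2 * L\<^sup>2 / (\<mu> * (1 - (rho_w n W)\<^sup>2)\<^sup>2)
                 * ((\<Sum>i<n. (norm (g i (\<pi> i) xs))\<^sup>2) / real n))"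
proof -
  define F where "F i = f i (\<pi> i)" for i
  define G where "G i = g i (\<pi> i)" for i
  have L: "L > 0" using mu muL by simp
  have nr: "real n > 0" using n by simp
  have X: "drr_step n W g a \<pi> x = (\<lambda>i. \<Sum>j<n. W i j *\<^sub>R (x j - a *\<^sub>R G j (x j)))"
    unfolding drr_step_def G_def ..
  have sc': "\<And>i x y. i < n \<Longrightarrow> F i y \<ge> F i x + inner (G i x) (y - x) + \<mu> / 2 * (norm (y - x))\<^sup>2"
    unfolding F_def G_def by (rule sc)
  have sc0: "\<And>i x y. i < n \<Longrightarrow> F i y \<ge> F i x + inner (G i x) (y - x)"
  proof -
    fix i x y assume "i < n"
    from sc'[OF this, of x y] show "F i y \<ge> F i x + inner (G i x) (y - x)" using mu
      by (smt (verit) divide_nonneg_pos mult_nonneg_nonneg zero_le_power2)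
  qed
  have lip': "\<And>i x y. i < n \<Longrightarrow> norm (G i x - G i y) \<le> L * norm (x - y)"
    unfolding G_def by (rule lip)
  have aL: "a * L\<^sup>2 \<le> \<mu>"
  proof -
    have e: "(a * L\<^sup>2)\<^sup>2 = a\<^sup>2 * L ^ 4" by (simp add: power2_eq_square power4_eq_xxxx)
    have "0 \<le> a\<^sup>2 * L ^ 4" using L by simp
    then have "(a * L\<^sup>2)\<^sup>2 \<le> 1920 * a\<^sup>2 * L ^ 4" unfolding e by simp
    also have "\<dots> \<le> (1 - (rho_w n W)\<^sup>2)\<^sup>2 * \<mu>\<^sup>2" by (rule h2)
    also have "\<dots> \<le> 1 * \<mu>\<^sup>2" using r1 rho_nonneg[of n W]
      by (intro mult_right_mono) (auto simp: power_le_one)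
    finally have "(a * L\<^sup>2)\<^sup>2 \<le> \<mu>\<^sup>2" by simp
    then show ?thesis using mu a by (metis abs_le_square_iff abs_of_pos abs_of_nonneg le_less mult_nonneg_nonneg zero_le_power2)
  qed
  define D where "D = (1 / real n) * (\<Sum>i<n. F i y) - (1 / real n) * (\<Sum>i<n. F i xs)
                     - inner ((1 / real n) *\<^sub>R (\<Sum>i<n. G i xs)) (y - xs)"
  have D0: "D \<ge> 0"
  proof -
    have "0 \<le> (\<Sum>i<n. F i y - F i xs - inner (G i xs) (y - xs))"
    proof (intro sum_nonneg)
      fix i assume "i \<in> {..<n}"
      then have "F i y \<ge> F i xs + inner (G i xs) (y - xs)" using sc0 by simp
      then show "0 \<le> F i y - F i xs - inner (G i xs) (y - xs)" by simp
    qed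
    also have "\<dots> = real n * D" unfolding D_def using nr
      by (simp add: sum_subtractf sum.distrib inner_sum_left field_simps)
    finally show ?thesis using nr by (simp add: zero_le_mult_iff)
  qed
  note AX = avg_part[where x=x and y=y and xs=xs and F=F and G=G and W=W and \<mu>=\<mu> and L=L and a=a, OF n W_sym W_stoch sc' lip' mu a aL L]
  note CX = cons_part[where x=x and a=a and y=y and xs=xs and F=F and G=G and W=W and L=L, OF n W_sym W_stoch sc0 lip' L r1]
  note main = coef_arith[OF a mu muL rho_nonneg r1 h1 h2 h3 nr _ _ D0 _ AX[folded D_def] CX[folded D_def]]
  have E0: "0 \<le> cons_err n x" unfolding cons_err_def by (simp add: sum_nonneg)
  note main' = main[OF zero_le_power2 E0 sum_nonneg[OF zero_le_power2]]
  show ?thesis using main' unfolding omega_def drr_step_def D_def F_def G_def by simp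
qed

lemma PS_perm: "\<sigma> \<in> perm_space n m t \<Longrightarrow> i < n \<Longrightarrow> \<sigma> t i permutes {..<m}"
  unfolding perm_space_def perm_set_def by (auto simp: PiE_iff)

lemma PS_finite: "finite (perm_space n m t)"
  unfolding perm_space_def perm_set_def
  by (intro finite_PiE) (auto intro: finite_permutations)

lemma PS_nonempty: "perm_space n m t \<noteq> {}"
proof -
  have "(\<lambda>s\<in>{..t}. \<lambda>i\<in>{..<n}. id) \<in> perm_space n m t"
    unfolding perm_space_def perm_set_def by (auto simp: PiE_iff permutes_id)
  then show ?thesis by blast
qed

lemma PS_card_pos: "card (perm_space n m t) > 0"
  using PS_finite PS_nonempty by (simp add: card_gt_0_iff)

lemma Exp_mono: "(\<And>\<sigma>. \<sigma> \<in> perm_space n m t \<Longrightarrow> X \<sigma> \<le> Y \<sigma>) \<Longrightarrow> Exp n m t X \<le> Exp n m t Y"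
  unfolding Exp_def by (intro divide_right_mono sum_mono) auto

lemma Exp_cong: "(\<And>\<sigma>. \<sigma> \<in> perm_space n m t \<Longrightarrow> X \<sigma> = Y \<sigma>) \<Longrightarrow> Exp n m t X = Exp n m t Y"
  unfolding Exp_def by (metis (mono_tags, lifting) sum.cong)

lemma Exp_add: "Exp n m t (\<lambda>\<sigma>. X \<sigma> + Y \<sigma>) = Exp n m t X + Exp n m t Y"
  unfolding Exp_def by (simp add: sum.distrib add_divide_distrib)

lemma Exp_scale: "Exp n m t (\<lambda>\<sigma>. c * X \<sigma>) = c * Exp n m t X"
  unfolding Exp_def by (simp add: sum_distrib_left[symmetric])

lemma Exp_sum: "Exp n m t (\<lambda>\<sigma>. \<Sum>i\<in>I. X i \<sigma>) = (\<Sum>i\<in>I. Exp n m t (X i))"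
  unfolding Exp_def by (subst sum.swap) (simp add: sum_divide_distrib)

lemma fiber_card:
  assumes i: "i < n" and k: "k < m" and k': "k' < m"
  shows "card {\<sigma> \<in> perm_space n m t. \<sigma> t i l = k} \<le> card {\<sigma> \<in> perm_space n m t. \<sigma> t i l = k'}"
proof -
  define \<phi> where "\<phi> \<sigma> = \<sigma>(t := (\<sigma> t)(i := Transposition.transpose k k' \<circ> \<sigma> t i))" for \<sigma> :: "nat \<Rightarrow> nat \<Rightarrow> nat \<Rightarrow> nat"
  have inv: "\<phi> (\<phi> \<sigma>) = \<sigma>" for \<sigma>
  proof -
    have "Transposition.transpose k k' \<circ> (Transposition.transpose k k' \<circ> \<sigma> t i) = \<sigma> t i"
      by (simp add: comp_assoc[symmetric])
    then show ?thesis unfolding \<phi>_def by simp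
  qed
  have PS: "\<phi> \<sigma> \<in> perm_space n m t" if "\<sigma> \<in> perm_space n m t" for \<sigma>
  proof -
    have tp: "Transposition.transpose k k' permutes {..<m}" using k k' by (intro permutes_swap_id) auto
    have s1: "\<sigma> \<in> PiE {..t} (\<lambda>_. PiE {..<n} (\<lambda>_. perm_set m))" using that unfolding perm_space_def .
    have st: "\<sigma> t \<in> PiE {..<n} (\<lambda>_. perm_set m)" using PiE_mem[OF s1, of t] by simp
    have c: "Transposition.transpose k k' \<circ> \<sigma> t i \<in> perm_set m"
      unfolding perm_set_def using permutes_compose[OF PS_perm[OF that i] tp] by simp
    have "(\<sigma> t)(i := Transposition.transpose k k' \<circ> \<sigma> t i) \<in> PiE (insert i {..<n}) (\<lambda>_. perm_set m)"
      by (rule PiE_fun_upd[OF c st])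
    then have u: "(\<sigma> t)(i := Transposition.transpose k k' \<circ> \<sigma> t i) \<in> PiE {..<n} (\<lambda>_. perm_set m)"
      using i by (simp add: insert_absorb)
    have "\<phi> \<sigma> \<in> PiE (insert t {..t}) (\<lambda>_. PiE {..<n} (\<lambda>_. perm_set m))"
      unfolding \<phi>_def by (rule PiE_fun_upd[OF u s1])
    then show ?thesis unfolding perm_space_def by (simp add: insert_absorb)
  qed
  have "inj_on \<phi> {\<sigma> \<in> perm_space n m t. \<sigma> t i l = k}"
  proof (rule inj_onI)
    fix \<sigma>1 \<sigma>2 assume "\<phi> \<sigma>1 = \<phi> \<sigma>2"
    then have "\<phi> (\<phi> \<sigma>1) = \<phi> (\<phi> \<sigma>2)" by simp
    then show "\<sigma>1 = \<sigma>2" by (simp only: inv)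
  qed
  moreover have "\<phi> ` {\<sigma> \<in> perm_space n m t. \<sigma> t i l = k} \<subseteq> {\<sigma> \<in> perm_space n m t. \<sigma> t i l = k'}"
  proof
    fix \<tau> assume "\<tau> \<in> \<phi> ` {\<sigma> \<in> perm_space n m t. \<sigma> t i l = k}"
    then obtain \<sigma> where s: "\<sigma> \<in> perm_space n m t" "\<sigma> t i l = k" and \<tau>: "\<tau> = \<phi> \<sigma>" by blast
    have "\<phi> \<sigma> t i l = Transposition.transpose k k' (\<sigma> t i l)" unfolding \<phi>_def by simp
    also have "\<dots> = k'" using s(2) by simp
    finally show "\<tau> \<in> {\<sigma> \<in> perm_space n m t. \<sigma> t i l = k'}" using PS[OF s(1)] \<tau> by simp
  qed
  moreover have "finite {\<sigma> \<in> perm_space n m t. \<sigma> t i l = k'}" using PS_finite by simp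
  ultimately show ?thesis by (rule card_inj_on_le)
qed

lemma Exp_uniform:
  assumes i: "i < n" and l: "l < m"
  shows "Exp n m t (\<lambda>\<sigma>. h (\<sigma> t i l)) = (\<Sum>k<m. h k) / real m"
proof -
  let ?PS = "perm_space n m t"
  define fib where "fib k = {\<sigma> \<in> ?PS. \<sigma> t i l = k}" for k
  have img: "(\<lambda>\<sigma>. \<sigma> t i l) ` ?PS \<subseteq> {..<m}"
  proof
    fix y assume "y \<in> (\<lambda>\<sigma>. \<sigma> t i l) ` ?PS"
    then obtain \<sigma> where "\<sigma> \<in> ?PS" "y = \<sigma> t i l" by blast
    moreover have "l \<in> {..<m}" using l by simp
    ultimately show "y \<in> {..<m}" using permutes_in_image[OF PS_perm[OF \<open>\<sigma> \<in> ?PS\<close> i]] by blast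
  qed
  have c: "card (fib k) = card (fib 0)" if "k < m" for k
  proof -
    have zm: "0 < m" using l by simp
    show ?thesis using fiber_card[OF i that zm, of t l] fiber_card[OF i zm that, of t l] unfolding fib_def by linarith
  qed
  have "(\<Sum>\<sigma>\<in>?PS. h (\<sigma> t i l)) = (\<Sum>k<m. \<Sum>\<sigma>\<in>fib k. h (\<sigma> t i l))"
    unfolding fib_def by (rule sum.group[OF PS_finite finite_lessThan img, symmetric])
  also have "\<dots> = (\<Sum>k<m. real (card (fib 0)) * h k)"
  proof (intro sum.cong refl)
    fix k assume "k \<in> {..<m}"
    then have "card (fib k) = card (fib 0)" by (intro c) simp
    moreover have "(\<Sum>\<sigma>\<in>fib k. h (\<sigma> t i l)) = (\<Sum>\<sigma>\<in>fib k. h k)"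
      by (rule sum.cong) (simp_all add: fib_def)
    moreover have "(\<Sum>\<sigma>\<in>fib k. h k) = real (card (fib k)) * h k" by (rule sum_constant)
    ultimately show "(\<Sum>\<sigma>\<in>fib k. h (\<sigma> t i l)) = real (card (fib 0)) * h k" by simp
  qed
  also have "\<dots> = real (card (fib 0)) * (\<Sum>k<m. h k)" by (rule sum_distrib_left[symmetric])
  finally have S: "(\<Sum>\<sigma>\<in>?PS. h (\<sigma> t i l)) = real (card (fib 0)) * (\<Sum>k<m. h k)" .
  have "real (card ?PS) = (\<Sum>\<sigma>\<in>?PS. (1::real))" by simp
  also have "\<dots> = (\<Sum>k<m. \<Sum>\<sigma>\<in>fib k. (1::real))"
    unfolding fib_def by (rule sum.group[OF PS_finite finite_lessThan img, symmetric])
  also have "\<dots> = (\<Sum>k<m. real (card (fib 0)))"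
  proof (intro sum.cong refl)
    fix k assume "k \<in> {..<m}"
    then have "card (fib k) = card (fib 0)" by (intro c) simp
    then show "(\<Sum>\<sigma>\<in>fib k. (1::real)) = real (card (fib 0))" by simp
  qed
  also have "\<dots> = real m * real (card (fib 0))" by simp
  finally have C: "real (card ?PS) = real m * real (card (fib 0))" .
  have "real (card ?PS) > 0" using PS_card_pos[of n m t] by simp
  then have f0: "real (card (fib 0)) > 0" using C l by (simp add: zero_less_mult_iff)
  have m0: "real m > 0" using l by simp
  have "Exp n m t (\<lambda>\<sigma>. h (\<sigma> t i l)) = (real (card (fib 0)) * (\<Sum>k<m. h k)) / (real m * real (card (fib 0)))"
    unfolding Exp_def S C ..
  also have "\<dots> = (\<Sum>k<m. h k) / real m" using f0 m0 by simp
  finally show ?thesis .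
qed

lemma SC_facts:
  fixes a \<mu> L \<rho> :: real
  assumes a: "a > 0" and mu: "\<mu> > 0" and muL: "\<mu> \<le> L" and r0: "\<rho> \<ge> 0" and sc: "cond_SC \<rho> \<mu> L a"
  shows "\<rho>\<^sup>2 < 1" "a * \<mu> \<le> (1 - \<rho>\<^sup>2) / 2" "1920 * a\<^sup>2 * L ^ 4 \<le> (1 - \<rho>\<^sup>2)\<^sup>2 * \<mu>\<^sup>2"
    "48 * a\<^sup>2 * L\<^sup>2 * \<rho>\<^sup>2 \<le> (1 - \<rho>\<^sup>2)\<^sup>2"
proof -
  have L: "L > 0" using mu muL by simp
  have c1: "\<rho> \<noteq> 0 \<longrightarrow> a \<le> sqrt ((2 - \<rho>\<^sup>2) / (24 * \<rho>\<^sup>2 * (5 - \<rho>\<^sup>2))) * (1 - \<rho>\<^sup>2) / L"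
    and c2: "a \<le> (1 - \<rho>\<^sup>2) / (2 * \<mu>)" and c3: "a \<le> (1 - \<rho>\<^sup>2) * \<mu> / (8 * sqrt 30 * L\<^sup>2)"
    using sc unfolding cond_SC_def by auto
  have h1: "a * \<mu> \<le> (1 - \<rho>\<^sup>2) / 2" using c2 mu by (simp add: field_simps)
  show "a * \<mu> \<le> (1 - \<rho>\<^sup>2) / 2" by (rule h1)
  have "0 < a * \<mu>" using a mu by simp
  then have "(1 - \<rho>\<^sup>2) / 2 > 0" using h1 by linarith
  then have s: "1 - \<rho>\<^sup>2 > 0" by simp
  then show "\<rho>\<^sup>2 < 1" by simp
  have "a * (8 * sqrt 30 * L\<^sup>2) \<le> (1 - \<rho>\<^sup>2) * \<mu>" using c3 L by (simp add: field_simps)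
  then have "(a * (8 * sqrt 30 * L\<^sup>2))\<^sup>2 \<le> ((1 - \<rho>\<^sup>2) * \<mu>)\<^sup>2"
    using a L by (intro power_mono) auto
  then show "1920 * a\<^sup>2 * L ^ 4 \<le> (1 - \<rho>\<^sup>2)\<^sup>2 * \<mu>\<^sup>2"
    by (simp add: power_mult_distrib power4_eq_xxxx power2_eq_square mult_ac)
  show "48 * a\<^sup>2 * L\<^sup>2 * \<rho>\<^sup>2 \<le> (1 - \<rho>\<^sup>2)\<^sup>2"
  proof (cases "\<rho> = 0")
    case True then show ?thesis by simp
  next
    case False
    define Q where "Q = (2 - \<rho>\<^sup>2) / (24 * \<rho>\<^sup>2 * (5 - \<rho>\<^sup>2))"
    have r2: "\<rho>\<^sup>2 > 0" using False by simp
    have r5: "5 - \<rho>\<^sup>2 > 0" using s by simp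
    have Q0: "Q \<ge> 0" unfolding Q_def using r2 r5 s by simp
    have "a * L / (1 - \<rho>\<^sup>2) \<le> sqrt Q" using c1 False L s unfolding Q_def by (simp add: field_simps)
    then have "(a * L / (1 - \<rho>\<^sup>2))\<^sup>2 \<le> (sqrt Q)\<^sup>2" using a L s by (intro power_mono) auto
    then have "(a * L / (1 - \<rho>\<^sup>2))\<^sup>2 \<le> Q" using Q0 by simp
    then have "(a * L)\<^sup>2 \<le> Q * (1 - \<rho>\<^sup>2)\<^sup>2" using s by (simp add: power_divide field_simps)
    moreover have "Q * (1 - \<rho>\<^sup>2)\<^sup>2 = ((2 - \<rho>\<^sup>2) * (1 - \<rho>\<^sup>2)\<^sup>2) / (24 * \<rho>\<^sup>2 * (5 - \<rho>\<^sup>2))"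
      unfolding Q_def by simp
    ultimately have "(a * L)\<^sup>2 \<le> ((2 - \<rho>\<^sup>2) * (1 - \<rho>\<^sup>2)\<^sup>2) / (24 * \<rho>\<^sup>2 * (5 - \<rho>\<^sup>2))" by simp
    moreover have den: "24 * \<rho>\<^sup>2 * (5 - \<rho>\<^sup>2) > 0" using r2 r5 by simp
    ultimately have X: "(a * L)\<^sup>2 * (24 * \<rho>\<^sup>2 * (5 - \<rho>\<^sup>2)) \<le> (2 - \<rho>\<^sup>2) * (1 - \<rho>\<^sup>2)\<^sup>2"
      by (simp add: pos_le_divide_eq)
    have "96 * ((a * L)\<^sup>2 * \<rho>\<^sup>2) \<le> (a * L)\<^sup>2 * (24 * \<rho>\<^sup>2 * (5 - \<rho>\<^sup>2))"
    proof -
      have "(a * L)\<^sup>2 * \<rho>\<^sup>2 * 96 \<le> (a * L)\<^sup>2 * \<rho>\<^sup>2 * (24 * (5 - \<rho>\<^sup>2))"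
        using s by (intro mult_left_mono) auto
      then show ?thesis by (simp add: mult_ac)
    qed
    also have "\<dots> \<le> (2 - \<rho>\<^sup>2) * (1 - \<rho>\<^sup>2)\<^sup>2" by (rule X)
    also have "\<dots> \<le> 2 * (1 - \<rho>\<^sup>2)\<^sup>2" using r2 by (intro mult_right_mono) auto
    finally show ?thesis by (simp add: power_mult_distrib mult_ac)
  qed
qed

lemma grad_zero:
  fixes f :: "nat \<Rightarrow> nat \<Rightarrow> 'a::real_inner \<Rightarrow> real" and g :: "nat \<Rightarrow> nat \<Rightarrow> 'a \<Rightarrow> 'a"
  assumes n: "n \<ge> 1" and m: "m \<ge> 1"
    and sc: "\<forall>i<n. \<forall>l<m. \<forall>x y. f i l y \<ge> f i l x + g i l x \<bullet> (y - x) + \<mu> / 2 * (norm (y - x))\<^sup>2"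
    and lip: "\<forall>i<n. \<forall>l<m. \<forall>x y. norm (g i l x - g i l y) \<le> L * norm (x - y)"
    and mu: "\<mu> > 0" and L: "L > 0"
    and xs_min: "\<forall>y. (1 / real n) * (\<Sum>i<n. (1 / real m) * (\<Sum>l<m. f i l xs))
                   \<le> (1 / real n) * (\<Sum>i<n. (1 / real m) * (\<Sum>l<m. f i l y))"
  shows "(\<Sum>i<n. \<Sum>l<m. g i l xs) = 0"
proof -
  define \<Phi> where "\<Phi> y = (\<Sum>i<n. \<Sum>l<m. f i l y)" for y
  define G where "G = (\<Sum>i<n. \<Sum>l<m. g i l xs)"
  define N where "N = real n * real m"
  have N: "N > 0" unfolding N_def using n m by simp
  have min: "\<Phi> xs \<le> \<Phi> y" for y
  proof -
    have "(1 / real n) * (\<Sum>i<n. (1 / real m) * (\<Sum>l<m. f i l xs)) = \<Phi> xs / N"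
      unfolding \<Phi>_def N_def by (simp add: sum_divide_distrib[symmetric] divide_divide_eq_left mult.commute)
    moreover have "(1 / real n) * (\<Sum>i<n. (1 / real m) * (\<Sum>l<m. f i l y)) = \<Phi> y / N"
      unfolding \<Phi>_def N_def by (simp add: sum_divide_distrib[symmetric] divide_divide_eq_left mult.commute)
    ultimately have "\<Phi> xs / N \<le> \<Phi> y / N" using xs_min by metis
    then show ?thesis using N by (simp add: divide_le_cancel)
  qed
  have up: "f i l z \<le> f i l xs + inner (g i l xs) (z - xs) + L * (norm (z - xs))\<^sup>2" if "i < n" "l < m" for i l z
  proof -
    have 1: "f i l xs \<ge> f i l z + inner (g i l z) (xs - z)"
      using sc that mu by (smt (verit) divide_nonneg_pos mult_nonneg_nonneg zero_le_power2)
    have 2: "inner (g i l z - g i l xs) (z - xs) \<le> L * (norm (z - xs))\<^sup>2"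
    proof -
      have "inner (g i l z - g i l xs) (z - xs) \<le> norm (g i l z - g i l xs) * norm (z - xs)" by (rule norm_cauchy_schwarz)
      also have "\<dots> \<le> L * norm (z - xs) * norm (z - xs)" using lip that by (intro mult_right_mono) auto
      finally show ?thesis by (simp add: power2_eq_square)
    qed
    have "inner (g i l z) (xs - z) = - inner (g i l xs) (z - xs) - inner (g i l z - g i l xs) (z - xs)"
      by (simp add: inner_diff_left inner_diff_right)
    then show ?thesis using 1 2 by linarith
  qed
  define \<tau> where "\<tau> = 1 / (2 * N * L)"
  have tau: "\<tau> > 0" unfolding \<tau>_def using N L by simp
  define z where "z = xs - \<tau> *\<^sub>R G"
  have "\<Phi> z \<le> (\<Sum>i<n. \<Sum>l<m. f i l xs + inner (g i l xs) (z - xs) + L * (norm (z - xs))\<^sup>2)"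
    unfolding \<Phi>_def by (intro sum_mono up) auto
  also have "\<dots> = \<Phi> xs + inner G (z - xs) + N * (L * (norm (z - xs))\<^sup>2)"
    unfolding \<Phi>_def G_def N_def by (simp add: sum.distrib inner_sum_left)
  also have "\<dots> = \<Phi> xs - \<tau> * (norm G)\<^sup>2 + N * L * \<tau>\<^sup>2 * (norm G)\<^sup>2"
  proof -
    have gg: "inner G G = (norm G)\<^sup>2" by (simp add: power2_norm_eq_inner)
    show ?thesis unfolding z_def using tau
      by (simp add: gg power_mult_distrib algebra_simps power2_eq_square)
  qed
  also have "\<dots> = \<Phi> xs - (norm G)\<^sup>2 / (4 * N * L)"
    unfolding \<tau>_def using N L by (simp add: field_simps power2_eq_square)
  finally have "\<Phi> z \<le> \<Phi> xs - (norm G)\<^sup>2 / (4 * N * L)" .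
  with min[of z] have "(norm G)\<^sup>2 / (4 * N * L) \<le> 0" by simp
  moreover have "4 * N * L > 0" using N L by simp
  ultimately have "(norm G)\<^sup>2 \<le> 0" by (simp add: divide_le_0_iff)
  then show ?thesis unfolding G_def by simp
qed

lemma xstar_m:
  fixes g :: "nat \<Rightarrow> nat \<Rightarrow> 'a::real_vector \<Rightarrow> 'a"
  assumes \<sigma>: "\<sigma> \<in> perm_space n m t" and G0: "(\<Sum>i<n. \<Sum>l<m. g i l xs) = 0"
  shows "xstar_bar n g a (\<sigma> t) xs m = xs"
proof -
  have "(\<Sum>k<m. (1 / real n) *\<^sub>R (\<Sum>i<n. g i (\<sigma> t i k) xs)) = (1 / real n) *\<^sub>R (\<Sum>i<n. \<Sum>k<m. g i (\<sigma> t i k) xs)"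
    by (simp only: scaleR_sum_right[symmetric] sum.swap[of _ "{..<m}"])
  also have "(\<Sum>i<n. \<Sum>k<m. g i (\<sigma> t i k) xs) = (\<Sum>i<n. \<Sum>l<m. g i l xs)"
  proof (rule sum.cong[OF refl])
    fix i assume "i \<in> {..<n}"
    then have p: "\<sigma> t i permutes {..<m}" using PS_perm[OF \<sigma>] by simp
    show "(\<Sum>k<m. g i (\<sigma> t i k) xs) = (\<Sum>l<m. g i l xs)"
      using sum.permute[OF p, of "\<lambda>l. g i l xs"] by (simp add: comp_def)
  qed
  finally show ?thesis unfolding xstar_bar_def G0 by simp
qed

lemma main_t:
  fixes n m :: nat
    and W :: "nat \<Rightarrow> nat \<Rightarrow> real"
    and f :: "nat \<Rightarrow> nat \<Rightarrow> 'a::euclidean_space \<Rightarrow> real"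
    and g :: "nat \<Rightarrow> nat \<Rightarrow> 'a \<Rightarrow> 'a"
    and \<mu> L :: real
    and xs :: 'a
    and x0 :: "nat \<Rightarrow> 'a"
    and \<alpha> :: "nat \<Rightarrow> real"
  assumes n_pos: "n \<ge> 1" and m_pos: "m \<ge> 1"
    and W_sym: "\<forall>i<n. \<forall>j<n. W i j = W j i"
    and W_stoch: "\<forall>i<n. (\<Sum>j<n. W i j) = 1"
    and strongly_convex: "\<forall>i<n. \<forall>l<m. \<forall>x y.
          f i l y \<ge> f i l x + g i l x \<bullet> (y - x) + \<mu> / 2 * (norm (y - x))\<^sup>2"
    and lipschitz: "\<forall>i<n. \<forall>l<m. \<forall>x y. norm (g i l x - g i l y) \<le> L * norm (x - y)"
    and mu_pos: "0 < \<mu>" and mu_le_L: "\<mu> \<le> L"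
    and G0: "(\<Sum>i<n. \<Sum>l<m. g i l xs) = 0"
    and a_pos: "0 < \<alpha> t" and scond: "cond_SC (rho_w n W) \<mu> L (\<alpha> t)"
  defines "a \<equiv> \<alpha> t" and "\<rho> \<equiv> rho_w n W" and "q \<equiv> 1 - \<alpha> t * \<mu> / 4"
    and "C \<equiv> \<alpha> t * sigma_shuffle_sq n m f g (\<alpha> t) xs t
                    * (1 + 240 * (\<alpha> t)\<^sup>2 * (rho_w n W)\<^sup>2 * L ^ 3 / (\<mu> * (1 - (rho_w n W)\<^sup>2)\<^sup>2))
                  + 120 * \<alpha> t ^ 3 * (rho_w n W)\<^sup>2 * L\<^sup>2 / (\<mu> * (1 - (rho_w n W)\<^sup>2)\<^sup>2) * sigma_star_sq n m g xs"
  shows "(\<forall>l\<le>m. drr_H n m W g \<alpha> x0 xs L \<mu> t l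
                  \<le> q ^ l * drr_H n m W g \<alpha> x0 xs L \<mu> t 0 + 2 * C * (\<Sum>k<l. q ^ k))
            \<and> drr_Htilde n m W g \<alpha> x0 xs L \<mu> t
                  \<le> q ^ m * drr_H n m W g \<alpha> x0 xs L \<mu> t 0 + 2 * C * (\<Sum>k<m. q ^ k)"
proof -
  note SC = SC_facts[OF a_pos mu_pos mu_le_L rho_nonneg scond]
  define \<omega> where "\<omega> = omega n L \<mu> (rho_w n W) (\<alpha> t)"
  define K where "K = 240 * (\<alpha> t)\<^sup>2 * (rho_w n W)\<^sup>2 * L ^ 3 / (\<mu> * (1 - (rho_w n W)\<^sup>2)\<^sup>2)"
  define c3 where "c3 = 120 * \<alpha> t ^ 3 * (rho_w n W)\<^sup>2 * L\<^sup>2 / (\<mu> * (1 - (rho_w n W)\<^sup>2)\<^sup>2)"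
  let ?PS = "perm_space n m t"
  define X where "X \<sigma> l = drr_x n m W g \<alpha> x0 \<sigma> t l" for \<sigma> l
  define Y where "Y \<sigma> l = xstar_bar n g (\<alpha> t) (\<sigma> t) xs l" for \<sigma> :: "nat \<Rightarrow> nat \<Rightarrow> nat \<Rightarrow> nat" and l
  define P where "P l \<sigma> = (norm (avg n (X \<sigma> l) - Y \<sigma> l))\<^sup>2 + \<omega> * cons_err n (X \<sigma> l)" for l \<sigma>
  define Dq where "Dq l \<sigma> = (1 / real n) * (\<Sum>i<n. f i (\<sigma> t i l) (Y \<sigma> l)) - (1 / real n) * (\<Sum>i<n. f i (\<sigma> t i l) xs)
                     - inner ((1 / real n) *\<^sub>R (\<Sum>i<n. g i (\<sigma> t i l) xs)) (Y \<sigma> l - xs)" for l :: nat and \<sigma>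
  define V where "V l \<sigma> = (\<Sum>i<n. (norm (g i (\<sigma> t i l) xs))\<^sup>2) / real n" for l :: nat and \<sigma>
  have H: "drr_H n m W g \<alpha> x0 xs L \<mu> t l = Exp n m t (P l)" for l
    unfolding drr_H_def P_def Exp_add Exp_scale \<omega>_def X_def Y_def ..
  have K0: "K \<ge> 0" unfolding K_def using mu_pos mu_le_L by simp
  have c30: "c3 \<ge> 0" unfolding c3_def using mu_pos a_pos by simp
  have step: "P (Suc l) \<sigma> \<le> q * P l \<sigma> + 2 * (\<alpha> t * (1 + K) * Dq l \<sigma> + c3 * V l \<sigma>)"
    if \<sigma>: "\<sigma> \<in> ?PS" and l: "l < m" for \<sigma> l
  proof -
    have lt: "\<sigma> t i l < m" if "i < n" for i
      using permutes_in_image[OF PS_perm[OF \<sigma> that]] l by simp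
    have sc: "\<And>i x y. i < n \<Longrightarrow> f i (\<sigma> t i l) y \<ge> f i (\<sigma> t i l) x + inner (g i (\<sigma> t i l) x) (y - x) + \<mu> / 2 * (norm (y - x))\<^sup>2"
      using strongly_convex lt by blast
    have lip: "\<And>i x y. i < n \<Longrightarrow> norm (g i (\<sigma> t i l) x - g i (\<sigma> t i l) y) \<le> L * norm (x - y)"
      using lipschitz lt by blast
    note ds = det_step[where \<pi>="\<lambda>j. \<sigma> t j l" and x="X \<sigma> l" and y="Y \<sigma> l" and xs=xs and f=f and g=g,
        OF n_pos W_sym W_stoch sc lip a_pos mu_pos mu_le_L SC(1) SC(2) SC(3) SC(4)]
    have XS: "X \<sigma> (Suc l) = drr_step n W g (\<alpha> t) (\<lambda>j. \<sigma> t j l) (X \<sigma> l)"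
      unfolding X_def drr_x_def by simp
    have YS: "Y \<sigma> (Suc l) = Y \<sigma> l - \<alpha> t *\<^sub>R ((1 / real n) *\<^sub>R (\<Sum>i<n. g i (\<sigma> t i l) xs))"
      unfolding Y_def by (rule xstar_Suc)
    show ?thesis unfolding P_def XS YS q_def Dq_def V_def K_def c3_def \<omega>_def by (rule ds)
  qed
  have ED: "Exp n m t (Dq l) \<le> sigma_shuffle_sq n m f g (\<alpha> t) xs t" if l: "l < m" for l
  proof -
    have "Exp n m t (Dq l) = Exp n m t (\<lambda>\<sigma>.
        let sbar = (\<lambda>y. (1 / real n) * (\<Sum>i<n. f i (\<sigma> t i l) y));
            gsbar = (1 / real n) *\<^sub>R (\<Sum>i<n. g i (\<sigma> t i l) xs);
            y = xstar_bar n g (\<alpha> t) (\<sigma> t) xs l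
        in sbar y - sbar xs - inner gsbar (y - xs))"
      unfolding Dq_def Y_def Let_def ..
    also have "\<dots> \<le> sigma_shuffle_sq n m f g (\<alpha> t) xs t"
      unfolding sigma_shuffle_sq_def using l by (intro Max_ge) auto
    finally show ?thesis .
  qed
  have EV: "Exp n m t (V l) = sigma_star_sq n m g xs" if l: "l < m" for l
  proof -
    have "Exp n m t (V l) = Exp n m t (\<lambda>\<sigma>. (1 / real n) * (\<Sum>i<n. (norm (g i (\<sigma> t i l) xs))\<^sup>2))"
      unfolding V_def by simp
    also have "\<dots> = (1 / real n) * (\<Sum>i<n. Exp n m t (\<lambda>\<sigma>. (norm (g i (\<sigma> t i l) xs))\<^sup>2))"
      unfolding Exp_scale Exp_sum ..
    also have "\<dots> = (1 / real n) * (\<Sum>i<n. (\<Sum>k<m. (norm (g i k xs))\<^sup>2) / real m)"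
    proof -
      have "Exp n m t (\<lambda>\<sigma>. (norm (g i (\<sigma> t i l) xs))\<^sup>2) = (\<Sum>k<m. (norm (g i k xs))\<^sup>2) / real m"
        if "i \<in> {..<n}" for i
        using Exp_uniform[where h="\<lambda>k. (norm (g i k xs))\<^sup>2" and i=i and n=n and l=l and m=m and t=t] that l by simp
      then show ?thesis by (intro arg_cong2[where f="(*)"] refl sum.cong) auto
    qed
    also have "\<dots> = sigma_star_sq n m g xs"
      unfolding sigma_star_sq_def by (simp add: sum_divide_distrib[symmetric] field_simps)
    finally show ?thesis .
  qed
  have Hstep: "Exp n m t (P (Suc l)) \<le> q * Exp n m t (P l) + 2 * C" if l: "l < m" for l
  proof -
    have "Exp n m t (P (Suc l)) \<le> Exp n m t (\<lambda>\<sigma>. q * P l \<sigma> + 2 * (\<alpha> t * (1 + K) * Dq l \<sigma> + c3 * V l \<sigma>))"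
      by (intro Exp_mono step l)
    also have "\<dots> = q * Exp n m t (P l) + 2 * (\<alpha> t * (1 + K) * Exp n m t (Dq l) + c3 * Exp n m t (V l))"
      unfolding Exp_add Exp_scale ..
    also have "\<dots> \<le> q * Exp n m t (P l) + 2 * (\<alpha> t * (1 + K) * sigma_shuffle_sq n m f g (\<alpha> t) xs t + c3 * sigma_star_sq n m g xs)"
      using ED[OF l] EV[OF l] K0 a_pos by (simp add: mult_left_mono)
    also have "\<dots> = q * Exp n m t (P l) + 2 * C"
      unfolding C_def K_def c3_def by (simp add: algebra_simps)
    finally show ?thesis .
  qed
  have q0: "q \<ge> 0"
  proof -
    have "(1 - (rho_w n W)\<^sup>2) / 2 \<le> 1 / 2" by simp
    then have "\<alpha> t * \<mu> \<le> 1 / 2" using SC(2) by linarith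
    then show ?thesis unfolding q_def by simp
  qed
  have ind: "l \<le> m \<longrightarrow> Exp n m t (P l) \<le> q ^ l * Exp n m t (P 0) + 2 * C * (\<Sum>k<l. q ^ k)" for l
  proof (induction l)
    case 0 then show ?case by simp
  next
    case (Suc l)
    show ?case
    proof
      assume "Suc l \<le> m"
      then have l: "l < m" by simp
      have "Exp n m t (P (Suc l)) \<le> q * Exp n m t (P l) + 2 * C" by (rule Hstep[OF l])
      also have "\<dots> \<le> q * (q ^ l * Exp n m t (P 0) + 2 * C * (\<Sum>k<l. q ^ k)) + 2 * C"
        using Suc.IH l q0 by (simp add: mult_left_mono)
      also have "\<dots> = q ^ Suc l * Exp n m t (P 0) + 2 * C * (\<Sum>k<Suc l. q ^ k)"
      proof -
        have "(\<Sum>k<Suc l. q ^ k) = 1 + q * (\<Sum>k<l. q ^ k)"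
          by (simp only: sum.lessThan_Suc_shift power_0 power_Suc sum_distrib_left)
        then show ?thesis by (simp add: algebra_simps)
      qed
      finally show "Exp n m t (P (Suc l)) \<le> q ^ Suc l * Exp n m t (P 0) + 2 * C * (\<Sum>k<Suc l. q ^ k)" .
    qed
  qed
  have Ht: "drr_Htilde n m W g \<alpha> x0 xs L \<mu> t = Exp n m t (P m)"
  proof -
    have "drr_Htilde n m W g \<alpha> x0 xs L \<mu> t
        = Exp n m t (\<lambda>\<sigma>. (norm (avg n (X \<sigma> m) - Y \<sigma> m))\<^sup>2) + \<omega> * Exp n m t (\<lambda>\<sigma>. cons_err n (X \<sigma> m))"
      unfolding drr_Htilde_def \<omega>_def
    proof (intro arg_cong2[where f="(+)"] arg_cong2[where f="(*)"] refl Exp_cong)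
      fix \<sigma> assume \<sigma>: "\<sigma> \<in> ?PS"
      have XX: "drr_iter n m W g \<alpha> x0 \<sigma> (Suc t) = X \<sigma> m" unfolding X_def drr_x_def by simp
      show "(norm (avg n (drr_iter n m W g \<alpha> x0 \<sigma> (Suc t)) - xs))\<^sup>2 = (norm (avg n (X \<sigma> m) - Y \<sigma> m))\<^sup>2"
        unfolding XX Y_def xstar_m[where \<sigma>=\<sigma> and n=n and m=m and t=t and g=g and xs=xs, OF \<sigma> G0] ..
      show "cons_err n (drr_iter n m W g \<alpha> x0 \<sigma> (Suc t)) = cons_err n (X \<sigma> m)" unfolding XX ..
    qed
    also have "\<dots> = Exp n m t (P m)" unfolding P_def Exp_add Exp_scale ..
    finally show ?thesis .
  qed
  show ?thesis unfolding H Ht using ind by auto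
qed

theorem lemma8:
  fixes n m :: nat
    and W :: "nat \<Rightarrow> nat \<Rightarrow> real"
    and f :: "nat \<Rightarrow> nat \<Rightarrow> 'a::euclidean_space \<Rightarrow> real"
    and g :: "nat \<Rightarrow> nat \<Rightarrow> 'a \<Rightarrow> 'a"
    and \<mu> L :: real
    and xs :: 'a
    and x0 :: "nat \<Rightarrow> 'a"
    and \<alpha> :: "nat \<Rightarrow> real"
  assumes n_pos: "n \<ge> 1" and m_pos: "m \<ge> 1"
    and W_nonneg: "\<forall>i<n. \<forall>j<n. W i j \<ge> 0"
    and W_sym: "\<forall>i<n. \<forall>j<n. W i j = W j i"
    and W_stoch: "\<forall>i<n. (\<Sum>j<n. W i j) = 1"
    and W_connected: "\<forall>i<n. \<forall>j<n.
          (i, j) \<in> {(a, b). a < n \<and> b < n \<and> a \<noteq> b \<and> W a b > 0}\<^sup>*"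
    and grad: "\<forall>i<n. \<forall>l<m. \<forall>x. (f i l has_derivative (\<lambda>h. g i l x \<bullet> h)) (at x)"
    and strongly_convex: "\<forall>i<n. \<forall>l<m. \<forall>x y.
          f i l y \<ge> f i l x + g i l x \<bullet> (y - x) + \<mu> / 2 * (norm (y - x))\<^sup>2"
    and lipschitz: "\<forall>i<n. \<forall>l<m. \<forall>x y. norm (g i l x - g i l y) \<le> L * norm (x - y)"
    and mu_pos: "0 < \<mu>" and mu_le_L: "\<mu> \<le> L"
    and xs_min: "\<forall>y. (1 / real n) * (\<Sum>i<n. (1 / real m) * (\<Sum>l<m. f i l xs))
                   \<le> (1 / real n) * (\<Sum>i<n. (1 / real m) * (\<Sum>l<m. f i l y))"
    and step: "\<forall>t. 0 < \<alpha> t \<and> cond_SC (rho_w n W) \<mu> L (\<alpha> t)"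
  shows "\<forall>t. let a = \<alpha> t; \<rho> = rho_w n W; q = 1 - a * \<mu> / 4;
              C = a * sigma_shuffle_sq n m f g a xs t
                    * (1 + 240 * a\<^sup>2 * \<rho>\<^sup>2 * L ^ 3 / (\<mu> * (1 - \<rho>\<^sup>2)\<^sup>2))
                  + 120 * a ^ 3 * \<rho>\<^sup>2 * L\<^sup>2 / (\<mu> * (1 - \<rho>\<^sup>2)\<^sup>2) * sigma_star_sq n m g xs
           in (\<forall>l\<le>m. drr_H n m W g \<alpha> x0 xs L \<mu> t l
                  \<le> q ^ l * drr_H n m W g \<alpha> x0 xs L \<mu> t 0 + 2 * C * (\<Sum>k<l. q ^ k))
            \<and> drr_Htilde n m W g \<alpha> x0 xs L \<mu> t
                  \<le> q ^ m * drr_H n m W g \<alpha> x0 xs L \<mu> t 0 + 2 * C * (\<Sum>k<m. q ^ k)"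
  proof (intro allI)
  fix t
  have L: "L > 0" using mu_pos mu_le_L by simp
  have G0: "(\<Sum>i<n. \<Sum>l<m. g i l xs) = 0"
    by (rule grad_zero[OF n_pos m_pos strongly_convex lipschitz mu_pos L xs_min])
  have a_pos: "0 < \<alpha> t" and scond: "cond_SC (rho_w n W) \<mu> L (\<alpha> t)" using step by auto
  note R = main_t[where n=n and m=m and W=W and f=f and g=g and \<mu>=\<mu> and L=L and xs=xs and \<alpha>=\<alpha> and t=t,
      OF n_pos m_pos W_sym W_stoch strongly_convex lipschitz mu_pos mu_le_L G0 a_pos scond]
  show "let a = \<alpha> t; \<rho> = rho_w n W; q = 1 - a * \<mu> / 4;
              C = a * sigma_shuffle_sq n m f g a xs t
                    * (1 + 240 * a\<^sup>2 * \<rho>\<^sup>2 * L ^ 3 / (\<mu> * (1 - \<rho>\<^sup>2)\<^sup>2))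
                  + 120 * a ^ 3 * \<rho>\<^sup>2 * L\<^sup>2 / (\<mu> * (1 - \<rho>\<^sup>2)\<^sup>2) * sigma_star_sq n m g xs
           in (\<forall>l\<le>m. drr_H n m W g \<alpha> x0 xs L \<mu> t l
                  \<le> q ^ l * drr_H n m W g \<alpha> x0 xs L \<mu> t 0 + 2 * C * (\<Sum>k<l. q ^ k))
            \<and> drr_Htilde n m W g \<alpha> x0 xs L \<mu> t
                  \<le> q ^ m * drr_H n m W g \<alpha> x0 xs L \<mu> t 0 + 2 * C * (\<Sum>k<m. q ^ k)"
    unfolding Let_def by (rule R)
qed

end
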